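(* Every piecewise testable set over a finite alphabet $\Sigma$ can be accepted by an end-decisive MM-QFA with bounded error.
   Context: A piecewise testable set over $\Sigma$ is a finite Boolean combination (unions, intersections, complements) of sets of the form $\Sigma^*z_1\Sigma^*z_2\Sigma^*\cdots\Sigma^*z_n\Sigma^*$ with $z_1,\dots,z_n\in\Sigma$. A measure-many quantum finite automaton (MM-QFA) over $\Sigma$ is a tuple $(Q,\Sigma,\{U_\sigma\}_{\sigma\in\Sigma\cup\{\$\}},q_0,Q_{acc},Q_{rej})$ with $Q$ finite indexing an orthonormal basis of $\mathbb{C}^Q$, end-marker $\$\notin\Sigma$, unitary $U_\sigma$, initial state $q_0$, and $Q$ partitioned into $Q_{acc},Q_{rej},Q_{non}$ with orthogonal projections $P_{acc},P_{rej},P_{non}$. On input $x$ it processes $x\$$ maintaining $(\psi,p_{acc},p_{rej})$, initially $(|q_0\rangle,0,0)$; on reading $\sigma$: $\psi'=U_\sigma\psi$, $p_{acc}\mathrel{+}=\|P_{acc}\psi'\|^2$, $p_{rej}\mathrel{+}=\|P_{rej}\psi'\|^2$, $\psi\leftarrow P_{non}\psi'$; the acceptance probability $p(x)$ is the final $p_{acc}$. It is end-decisive if $P_{acc}\psi'=0$ after reading every non-end-marker symbol, on every input. It accepts $L$ with bounded error if for some $\lambda$ and $\epsilon>0$, $p(x)>\lambda+\epsilon$ for $x\in L$ and $p(x)<\lambda-\epsilon$ for $x\notin L$. *)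

theory Defs
  imports Complex_Main "Jordan_Normal_Form.Matrix"
begin

text \<open>Words are lists over the alphabet type 'a. The set
  Sigma* z1 Sigma* z2 Sigma* ... Sigma* zn Sigma* is the set of words
  matching the pattern [z1,...,zn].\<close>

fun in_pattern :: "'a list \<Rightarrow> 'a list \<Rightarrow> bool" where
  "in_pattern [] w = True"
| "in_pattern (z # zs) w = (\<exists>u v. w = u @ z # v \<and> in_pattern zs v)"

definition pattern_lang :: "'a list \<Rightarrow> 'a list set" where
  "pattern_lang zs = {w. in_pattern zs w}"

inductive piecewise_testable :: "'a list set \<Rightarrow> bool" where
  base: "piecewise_testable (pattern_lang zs)"
| union: "piecewise_testable A \<Longrightarrow> piecewise_testable B \<Longrightarrow> piecewise_testable (A \<union> B)"
| inter: "piecewise_testable A \<Longrightarrow> piecewise_testable B \<Longrightarrow> piecewise_testable (A \<inter> B)"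
| compl: "piecewise_testable A \<Longrightarrow> piecewise_testable (- A)"

text \<open>States are 0..<qdim (indexing an orthonormal basis of C^qdim).
  Input symbols are Some a; the end-marker is None.\<close>
record 'a mmqfa =
  qdim :: nat
  trans :: "'a option \<Rightarrow> complex mat"
  init :: nat
  Qacc :: "nat set"
  Qrej :: "nat set"

definition adjoint_mat :: "complex mat \<Rightarrow> complex mat" where
  "adjoint_mat U = mat (dim_col U) (dim_row U) (\<lambda>(i,j). cnj (U $$ (j,i)))"

definition unitary_mat :: "nat \<Rightarrow> complex mat \<Rightarrow> bool" where
  "unitary_mat n U \<longleftrightarrow> U \<in> carrier_mat n n \<and> adjoint_mat U * U = 1\<^sub>m n
     \<and> U * adjoint_mat U = 1\<^sub>m n"

definition Qnon :: "'a mmqfa \<Rightarrow> nat set" where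
  "Qnon M = {..<qdim M} - Qacc M - Qrej M"

definition wf_mmqfa :: "'a mmqfa \<Rightarrow> bool" where
  "wf_mmqfa M \<longleftrightarrow> init M < qdim M
     \<and> Qacc M \<subseteq> {..<qdim M} \<and> Qrej M \<subseteq> {..<qdim M} \<and> Qacc M \<inter> Qrej M = {}
     \<and> (\<forall>s. unitary_mat (qdim M) (trans M s))"

definition proj :: "nat set \<Rightarrow> complex vec \<Rightarrow> complex vec" where
  "proj S v = vec (dim_vec v) (\<lambda>i. if i \<in> S then v $ i else 0)"

definition sqnorm :: "complex vec \<Rightarrow> real" where
  "sqnorm v = (\<Sum>i<dim_vec v. (cmod (v $ i))\<^sup>2)"

definition basis_ket :: "nat \<Rightarrow> nat \<Rightarrow> complex vec" where
  "basis_ket n q = vec n (\<lambda>i. if i = q then 1 else 0)"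

text \<open>One step on symbol s: configuration (psi, p_acc, p_rej).\<close>
definition step :: "'a mmqfa \<Rightarrow> 'a option \<Rightarrow> complex vec \<times> real \<times> real
    \<Rightarrow> complex vec \<times> real \<times> real" where
  "step M s c = (case c of (psi, pa, pr) \<Rightarrow>
      let psi' = trans M s *\<^sub>v psi in
      (proj (Qnon M) psi', pa + sqnorm (proj (Qacc M) psi'), pr + sqnorm (proj (Qrej M) psi')))"

definition run :: "'a mmqfa \<Rightarrow> 'a option list \<Rightarrow> complex vec \<times> real \<times> real" where
  "run M ss = fold (step M) ss (basis_ket (qdim M) (init M), 0, 0)"

definition acc_prob :: "'a mmqfa \<Rightarrow> 'a list \<Rightarrow> real" where
  "acc_prob M x = fst (snd (run M (map Some x @ [None])))"

definition end_decisive :: "'a mmqfa \<Rightarrow> bool" where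
  "end_decisive M \<longleftrightarrow> (\<forall>x a. proj (Qacc M) (trans M (Some a) *\<^sub>v fst (run M (map Some x))) = 0\<^sub>v (qdim M))"

definition accepts_bounded_error :: "'a mmqfa \<Rightarrow> 'a list set \<Rightarrow> bool" where
  "accepts_bounded_error M L \<longleftrightarrow> (\<exists>lam \<epsilon>::real. \<epsilon> > 0 \<and>
     (\<forall>x. (x \<in> L \<longrightarrow> acc_prob M x > lam + \<epsilon>) \<and> (x \<notin> L \<longrightarrow> acc_prob M x < lam - \<epsilon>)))"

end

theory Submission
  imports Defs
begin


section \<open>Combinatorics of patterns\<close>

lemma in_pattern_append_left: "in_pattern zs v \<Longrightarrow> in_pattern zs (u @ v)"
proof (cases zs)
  case Nil then show ?thesis by simp
next
  case (Cons z zs')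
  assume "in_pattern zs v"
  then obtain u' v' where "v = u' @ z # v'" "in_pattern zs' v'" using Cons by auto
  then have "u @ v = (u @ u') @ z # v'" by simp
  then show ?thesis using Cons \<open>in_pattern zs' v'\<close> by (simp only: in_pattern.simps) blast
qed

lemma in_pattern_cons_same: "in_pattern (c # cs) (c # w) \<longleftrightarrow> in_pattern cs w"
proof
  assume "in_pattern (c # cs) (c # w)"
  then obtain u v where uv: "c # w = u @ c # v" "in_pattern cs v" by auto
  show "in_pattern cs w"
  proof (cases u)
    case Nil then show ?thesis using uv by auto
  next
    case (Cons x u')
    then have "w = u' @ c # v" using uv by auto
    then show ?thesis using uv(2) in_pattern_append_left[of cs "c # v" u'] 
      in_pattern_append_left[of cs v "[c]"] by auto
  qed
next
  assume "in_pattern cs w"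
  then show "in_pattern (c # cs) (c # w)" by (simp only: in_pattern.simps) (metis append_Nil)
qed

lemma in_pattern_cons_diff: "c \<noteq> a \<Longrightarrow> in_pattern (c # cs) (a # w) \<longleftrightarrow> in_pattern (c # cs) w"
proof
  assume ca: "c \<noteq> a" and "in_pattern (c # cs) (a # w)"
  then obtain u v where uv: "a # w = u @ c # v" "in_pattern cs v" by auto
  then obtain u' where "u = a # u'" using ca by (cases u) auto
  then have "w = u' @ c # v" using uv by auto
  then show "in_pattern (c # cs) w" using uv by auto
next
  assume "in_pattern (c # cs) w"
  then obtain u v where uv: "w = u @ c # v" "in_pattern cs v" by auto
  then have "a # w = (a # u) @ c # v" by simp
  then show "in_pattern (c # cs) (a # w)" using uv(2) by (simp only: in_pattern.simps) blast
qed

definition pstep :: "'a list \<Rightarrow> 'a \<Rightarrow> nat \<Rightarrow> nat" where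
  "pstep z a p = (if p < length z \<and> z ! p = a then Suc p else p)"

definition prog :: "'a list \<Rightarrow> 'a list \<Rightarrow> nat" where
  "prog z w = fold (pstep z) w 0"

lemma fold_pstep_le: "p \<le> length z \<Longrightarrow> fold (pstep z) w p \<le> length z"
  by (induction w arbitrary: p) (auto simp: pstep_def)

lemma fold_pstep_len: "fold (pstep z) w (length z) = length z"
  by (induction w) (auto simp: pstep_def)

lemma fold_pstep_iff:
  "p \<le> length z \<Longrightarrow> fold (pstep z) w p = length z \<longleftrightarrow> in_pattern (drop p z) w"
proof (induction w arbitrary: p)
  case Nil
  then show ?case by (cases "drop p z") auto
next
  case (Cons a w)
  show ?case
  proof (cases "p < length z")
    case True
    have dz: "drop p z = z ! p # drop (Suc p) z" using True by (simp add: Cons_nth_drop_Suc)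
    show ?thesis
    proof (cases "z ! p = a")
      case True2: True
      have "fold (pstep z) (a # w) p = fold (pstep z) w (Suc p)" using True True2 by (simp add: pstep_def)
      moreover have "in_pattern (drop p z) (a # w) \<longleftrightarrow> in_pattern (drop (Suc p) z) w"
        using dz True2 in_pattern_cons_same[of a "drop (Suc p) z" w] by simp
      ultimately show ?thesis using Cons.IH[of "Suc p"] True by simp
    next
      case False
      have "fold (pstep z) (a # w) p = fold (pstep z) w p" using False by (simp add: pstep_def)
      moreover have "in_pattern (drop p z) (a # w) \<longleftrightarrow> in_pattern (drop p z) w"
        using dz False in_pattern_cons_diff[of "z ! p" a "drop (Suc p) z" w] by simp
      ultimately show ?thesis using Cons.IH[of p] Cons.prems by simp
    qed
  next
    case False
    then have "p = length z" using Cons.prems by simp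
    then show ?thesis using fold_pstep_len[of z "a # w"] by simp
  qed
qed

lemma prog_iff: "prog z w = length z \<longleftrightarrow> in_pattern z w"
  using fold_pstep_iff[of 0 z w] by (simp add: prog_def)

lemma prog_le: "prog z w \<le> length z"
  using fold_pstep_le[of 0 z w] by (simp add: prog_def)

lemma prog_snoc: "prog z (w @ [a]) = pstep z a (prog z w)"
  by (simp add: prog_def)

lemma prog_Nil: "prog z [] = 0" by (simp add: prog_def)

section \<open>Normal form of piecewise testable sets\<close>

lemma pt_normal_form:
  assumes "piecewise_testable L"
  shows "\<exists>Zs (F :: bool list \<Rightarrow> bool). (\<forall>z\<in>set Zs. z \<noteq> []) \<and>
     (\<forall>w. w \<in> L \<longleftrightarrow> F (map (\<lambda>z. in_pattern z w) Zs))"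
  using assms
proof (induction rule: piecewise_testable.induct)
  case (base zs)
  show ?case
  proof (cases "zs = []")
    case True
    then show ?thesis by (intro exI[of _ "[]"] exI[of _ "\<lambda>_. True"]) (auto simp: pattern_lang_def)
  next
    case False
    then show ?thesis by (intro exI[of _ "[zs]"] exI[of _ "\<lambda>bs. hd bs"]) (auto simp: pattern_lang_def)
  qed
next
  case (union A B)
  then obtain Z1 F1 Z2 F2 where h: "\<forall>z\<in>set Z1. z \<noteq> []" "\<forall>w. w \<in> A \<longleftrightarrow> F1 (map (\<lambda>z. in_pattern z w) Z1)"
    "\<forall>z\<in>set Z2. z \<noteq> []" "\<forall>w. w \<in> B \<longleftrightarrow> F2 (map (\<lambda>z. in_pattern z w) Z2)" by metis
  show ?case
    by (rule exI[of _ "Z1 @ Z2"], rule exI[of _ "\<lambda>bs. F1 (take (length Z1) bs) \<or> F2 (drop (length Z1) bs)"])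
      (use h in auto)
next
  case (inter A B)
  then obtain Z1 F1 Z2 F2 where h: "\<forall>z\<in>set Z1. z \<noteq> []" "\<forall>w. w \<in> A \<longleftrightarrow> F1 (map (\<lambda>z. in_pattern z w) Z1)"
    "\<forall>z\<in>set Z2. z \<noteq> []" "\<forall>w. w \<in> B \<longleftrightarrow> F2 (map (\<lambda>z. in_pattern z w) Z2)" by metis
  show ?case
    by (rule exI[of _ "Z1 @ Z2"], rule exI[of _ "\<lambda>bs. F1 (take (length Z1) bs) \<and> F2 (drop (length Z1) bs)"])
      (use h in auto)
next
  case (compl A)
  then obtain Z1 F1 where h: "\<forall>z\<in>set Z1. z \<noteq> []" "\<forall>w. w \<in> A \<longleftrightarrow> F1 (map (\<lambda>z. in_pattern z w) Z1)" by metis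
  show ?case by (rule exI[of _ Z1], rule exI[of _ "\<lambda>bs. \<not> F1 bs"]) (use h in auto)
qed



section \<open>Real kernels and their complex matrices\<close>

type_synonym kern = "nat \<Rightarrow> nat \<Rightarrow> real"

definition kapp :: "nat \<Rightarrow> kern \<Rightarrow> (nat \<Rightarrow> real) \<Rightarrow> nat \<Rightarrow> real" where
  "kapp n K v i = (\<Sum>j<n. K i j * v j)"

definition kmul :: "nat \<Rightarrow> kern \<Rightarrow> kern \<Rightarrow> kern" where
  "kmul n K L i k = (\<Sum>j<n. K i j * L j k)"

definition kmat :: "nat \<Rightarrow> kern \<Rightarrow> complex mat" where
  "kmat n K = mat n n (\<lambda>(i,j). complex_of_real (K i j))"

definition kvec :: "nat \<Rightarrow> (nat \<Rightarrow> real) \<Rightarrow> complex vec" where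
  "kvec n v = vec n (\<lambda>i. complex_of_real (v i))"

lemma kmat_carrier[simp]: "kmat n K \<in> carrier_mat n n"
  by (simp add: kmat_def)

lemma dim_kvec[simp]: "dim_vec (kvec n v) = n" by (simp add: kvec_def)

lemma kmat_mult: "kmat n K * kmat n L = kmat n (kmul n K L)"
  by (rule eq_matI) (auto simp: kmat_def kmul_def scalar_prod_def row_def col_def
      intro!: sum.cong simp flip: of_real_mult of_real_sum)

lemma kmat_mult_vec: "kmat n K *\<^sub>v kvec n v = kvec n (kapp n K v)"
  by (rule eq_vecI) (auto simp: kmat_def kvec_def kapp_def scalar_prod_def row_def
      intro!: sum.cong simp flip: of_real_mult of_real_sum)

lemma kvec_cong: "(\<And>i. i < n \<Longrightarrow> v i = w i) \<Longrightarrow> kvec n v = kvec n w"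
  by (auto simp: kvec_def)

lemma kmat_cong: "(\<And>i j. i < n \<Longrightarrow> j < n \<Longrightarrow> K i j = L i j) \<Longrightarrow> kmat n K = kmat n L"
  by (auto simp: kmat_def)

lemma adjoint_kmat: "adjoint_mat (kmat n K) = kmat n (\<lambda>i j. K j i)"
  by (auto simp: adjoint_mat_def kmat_def)

lemma one_kmat: "1\<^sub>m n = kmat n (\<lambda>i j. if i = j then 1 else 0)"
  by (rule eq_matI) (auto simp: kmat_def)

lemma unitary_kmat_invol:
  assumes "\<And>i j. i < n \<Longrightarrow> j < n \<Longrightarrow> K i j = K j i"
    and "\<And>i k. i < n \<Longrightarrow> k < n \<Longrightarrow> kmul n K K i k = (if i = k then 1 else 0)"
  shows "unitary_mat n (kmat n K)"
proof -
  have a: "adjoint_mat (kmat n K) = kmat n K"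
    unfolding adjoint_kmat by (rule kmat_cong) (use assms(1) in auto)
  have b: "kmat n K * kmat n K = 1\<^sub>m n"
    unfolding kmat_mult one_kmat by (rule kmat_cong) (use assms(2) in auto)
  show ?thesis unfolding unitary_mat_def a b by simp
qed

lemma adjoint_mat_mult:
  assumes "A \<in> carrier_mat n n" "B \<in> carrier_mat n n"
  shows "adjoint_mat (A * B) = adjoint_mat B * adjoint_mat A"
  using assms
  by (intro eq_matI) (auto simp: adjoint_mat_def scalar_prod_def row_def col_def
      intro!: sum.cong simp: mult.commute)

lemma adjoint_mat_carrier: "A \<in> carrier_mat n n \<Longrightarrow> adjoint_mat A \<in> carrier_mat n n"
  by (auto simp: adjoint_mat_def)

lemma unitary_mult:
  assumes "unitary_mat n A" "unitary_mat n B"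
  shows "unitary_mat n (A * B)"
proof -
  have A: "A \<in> carrier_mat n n" and B: "B \<in> carrier_mat n n" using assms by (auto simp: unitary_mat_def)
  have Aa: "adjoint_mat A \<in> carrier_mat n n" and Ba: "adjoint_mat B \<in> carrier_mat n n"
    using A B adjoint_mat_carrier by auto
  have "adjoint_mat (A * B) * (A * B) = adjoint_mat B * (adjoint_mat A * A) * B"
    using A B Aa Ba by (simp add: adjoint_mat_mult assoc_mult_mat[of _ n n _ n _ n])
  also have "\<dots> = 1\<^sub>m n" using assms A B Ba by (simp add: unitary_mat_def)
  finally have 1: "adjoint_mat (A * B) * (A * B) = 1\<^sub>m n" .
  have "(A * B) * adjoint_mat (A * B) = A * (B * adjoint_mat B) * adjoint_mat A"
    using A B Aa Ba by (simp add: adjoint_mat_mult assoc_mult_mat[of _ n n _ n _ n])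
  also have "\<dots> = 1\<^sub>m n" using assms A B Aa by (simp add: unitary_mat_def)
  finally have 2: "(A * B) * adjoint_mat (A * B) = 1\<^sub>m n" .
  show ?thesis using 1 2 A B by (simp add: unitary_mat_def)
qed

lemma proj_kvec: "proj S (kvec n v) = kvec n (\<lambda>i. if i \<in> S then v i else 0)"
  by (auto simp: proj_def kvec_def)

lemma sqnorm_kvec: "sqnorm (kvec n v) = (\<Sum>i<n. (v i)\<^sup>2)"
  by (simp add: sqnorm_def kvec_def)

lemma zero_kvec: "0\<^sub>v n = kvec n (\<lambda>_. 0)"
  by (auto simp: kvec_def)

lemma basis_ket_kvec: "basis_ket n q = kvec n (\<lambda>i. if i = q then 1 else 0)"
  by (auto simp: basis_ket_def kvec_def)



lemma sum_blocks: "(\<Sum>i<b * N. (g::nat\<Rightarrow>real) i) = (\<Sum>q<b. \<Sum>t<N. g (t + N * q) :: real)"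
proof -
  have "(\<Sum>i<b * N. g i) = (\<Sum>q<b. sum g {q * N..<q * N + N})"
    by (rule sum.nat_group[symmetric])
  also have "\<dots> = (\<Sum>q<b. \<Sum>t<N. g (t + N * q))"
  proof (rule sum.cong[OF refl])
    fix q
    have "sum g {0 + q * N..<N + q * N} = (\<Sum>t\<in>{0..<N}. g (t + q * N))"
      by (rule sum.shift_bounds_nat_ivl)
    then show "sum g {q * N..<q * N + N} = (\<Sum>t<N. g (t + N * q))"
      by (simp add: atLeast0LessThan add.commute mult.commute)
  qed
  finally show ?thesis .
qed

lemma prod_blocks: "(\<Prod>i<b * N. (g::nat\<Rightarrow>real) i) = (\<Prod>q<b. \<Prod>t<N. g (t + N * q) :: real)"
proof -
  have "(\<Prod>i<b * N. g i) = (\<Prod>q<b. prod g {q * N..<q * N + N})"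
    by (rule prod.nat_group[symmetric])
  also have "\<dots> = (\<Prod>q<b. \<Prod>t<N. g (t + N * q))"
  proof (rule prod.cong[OF refl])
    fix q
    have "prod g {0 + q * N..<N + q * N} = (\<Prod>t\<in>{0..<N}. g (t + q * N))"
      by (rule prod.shift_bounds_nat_ivl)
    then show "prod g {q * N..<q * N + N} = (\<Prod>t<N. g (t + N * q))"
      by (simp add: atLeast0LessThan add.commute mult.commute)
  qed
  finally show ?thesis .
qed

definition dg :: "nat \<Rightarrow> nat \<Rightarrow> nat \<Rightarrow> nat" where
  "dg B c t = t div B ^ c mod B"

lemma dg_lt: "0 < B \<Longrightarrow> dg B c t < B"
  by (simp add: dg_def)

lemma dg_low:
  assumes "0 < B" "i < B ^ G" "c < G"
  shows "dg B c (i + B ^ G * q) = dg B c i"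
proof -
  have e: "B ^ G = B ^ c * (B * B ^ (G - Suc c))"
    using assms(3) by (simp flip: power_add power_Suc)
  have "(i + B ^ G * q) div B ^ c = i div B ^ c + B * (B ^ (G - Suc c) * q)"
    using assms(1) by (simp add: e mult.assoc)
  then show ?thesis by (simp add: dg_def)
qed

lemma dg_high:
  assumes "0 < B" "i < B ^ G" "q < B"
  shows "dg B G (i + B ^ G * q) = q"
proof -
  have "(i + B ^ G * q) div B ^ G = q" using assms by simp
  then show ?thesis using assms by (simp add: dg_def)
qed

lemma tensor_sum:
  assumes "0 < B"
  shows "(\<Sum>t<B ^ G. \<Prod>c<G. f c (dg B c t)) = (\<Prod>c<G. \<Sum>v<B. f c v :: real)"
proof (induction G)
  case 0
  then show ?case by simp
next
  case (Suc G)
  have "(\<Sum>t<B ^ Suc G. \<Prod>c<Suc G. f c (dg B c t))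
      = (\<Sum>q<B. \<Sum>i<B ^ G. \<Prod>c<Suc G. f c (dg B c (i + B ^ G * q)))"
    by (simp add: sum_blocks mult.commute)
  also have "\<dots> = (\<Sum>q<B. \<Sum>i<B ^ G. (\<Prod>c<G. f c (dg B c i)) * f G q)"
  proof (intro sum.cong refl)
    fix q i assume q: "q \<in> {..<B}" and i: "i \<in> {..<B ^ G}"
    have "(\<Prod>c<G. f c (dg B c (i + B ^ G * q))) = (\<Prod>c<G. f c (dg B c i))"
      by (rule prod.cong) (use assms i dg_low in auto)
    then show "(\<Prod>c<Suc G. f c (dg B c (i + B ^ G * q))) = (\<Prod>c<G. f c (dg B c i)) * f G q"
      using dg_high[OF assms, of i G q] q i by simp
  qed
  also have "\<dots> = (\<Sum>q<B. (\<Prod>c<G. \<Sum>v<B. f c v) * f G q)"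
    by (simp add: sum_distrib_right[symmetric] Suc.IH)
  also have "\<dots> = (\<Prod>c<Suc G. \<Sum>v<B. f c v)"
    by (simp add: sum_distrib_left[symmetric])
  finally show ?case .
qed

lemma dg_zero_imp:
  assumes "0 < B" "t < B ^ G" "\<forall>c<G. dg B c t = 0"
  shows "t = 0"
  using assms(2,3)
proof (induction G arbitrary: t)
  case 0
  then show ?case by simp
next
  case (Suc G)
  define i where "i = t mod B ^ G"
  define q where "q = t div B ^ G"
  have t: "t = i + B ^ G * q" by (simp add: i_def q_def)
  have i: "i < B ^ G" using assms(1) by (simp add: i_def)
  have q: "q < B" using Suc.prems(1) by (simp add: q_def less_mult_imp_div_less mult.commute)
  have "dg B G t = q" using dg_high[OF assms(1) i q] t by simp
  then have q0: "q = 0" using Suc.prems(2) by auto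
  have "\<forall>c<G. dg B c i = 0"
  proof (intro allI impI)
    fix c assume "c < G"
    then show "dg B c i = 0" using Suc.prems(2) dg_low[OF assms(1) i \<open>c < G\<close>, of q] t by auto
  qed
  then have "i = 0" using Suc.IH i by auto
  then show ?case using t q0 by simp
qed

lemma dg_zero: "dg B c 0 = 0" by (simp add: dg_def)

section \<open>Tensor products of kernels and vectors\<close>

definition tk :: "nat \<Rightarrow> nat \<Rightarrow> (nat \<Rightarrow> kern) \<Rightarrow> kern" where
  "tk B G h t t' = (\<Prod>c<G. h c (dg B c t) (dg B c t'))"

definition tv :: "nat \<Rightarrow> nat \<Rightarrow> (nat \<Rightarrow> nat \<Rightarrow> real) \<Rightarrow> nat \<Rightarrow> real" where
  "tv B G x t = (\<Prod>c<G. x c (dg B c t))"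

definition ip :: "nat \<Rightarrow> (nat \<Rightarrow> real) \<Rightarrow> (nat \<Rightarrow> real) \<Rightarrow> real" where
  "ip n x y = (\<Sum>i<n. x i * y i)"

lemma kapp_tensor:
  assumes "0 < B"
  shows "kapp (B ^ G) (tk B G h) (tv B G x) t = tv B G (\<lambda>c. kapp B (h c) (x c)) t"
proof -
  have "kapp (B ^ G) (tk B G h) (tv B G x) t
     = (\<Sum>t'<B ^ G. \<Prod>c<G. h c (dg B c t) (dg B c t') * x c (dg B c t'))"
    by (simp add: kapp_def tk_def tv_def prod.distrib)
  also have "\<dots> = (\<Prod>c<G. \<Sum>v<B. h c (dg B c t) v * x c v)"
    by (rule tensor_sum[OF assms])
  finally show ?thesis by (simp add: tv_def kapp_def)
qed

lemma kmul_tensor: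
  assumes "0 < B"
  shows "kmul (B ^ G) (tk B G h) (tk B G h') t t'' = tk B G (\<lambda>c. kmul B (h c) (h' c)) t t''"
proof -
  have "kmul (B ^ G) (tk B G h) (tk B G h') t t''
     = (\<Sum>t'<B ^ G. \<Prod>c<G. h c (dg B c t) (dg B c t') * h' c (dg B c t') (dg B c t''))"
    by (simp add: kmul_def tk_def prod.distrib)
  also have "\<dots> = (\<Prod>c<G. \<Sum>v<B. h c (dg B c t) v * h' c v (dg B c t''))"
    by (rule tensor_sum[OF assms])
  finally show ?thesis by (simp add: tk_def kmul_def)
qed

lemma ip_tensor:
  assumes "0 < B"
  shows "ip (B ^ G) (tv B G x) (tv B G y) = (\<Prod>c<G. ip B (x c) (y c))"
proof -
  have "ip (B ^ G) (tv B G x) (tv B G y) = (\<Sum>t<B ^ G. \<Prod>c<G. x c (dg B c t) * y c (dg B c t))"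
    by (simp add: ip_def tv_def prod.distrib)
  also have "\<dots> = (\<Prod>c<G. \<Sum>v<B. x c v * y c v)"
    by (rule tensor_sum[OF assms])
  also have "\<dots> = (\<Prod>c<G. ip B (x c) (y c))" by (simp add: ip_def)
  finally show ?thesis .
qed

lemma tk_sym:
  assumes "0 < B" "\<And>c i j. c < G \<Longrightarrow> i < B \<Longrightarrow> j < B \<Longrightarrow> h c i j = h c j i"
  shows "tk B G h t t' = tk B G h t' t"
  unfolding tk_def by (rule prod.cong) (auto intro!: assms(2) dg_lt[OF assms(1)])

lemma tk_idem:
  assumes "0 < B" "\<And>c i j. c < G \<Longrightarrow> i < B \<Longrightarrow> j < B \<Longrightarrow> kmul B (h c) (h c) i j = h c i j"
  shows "kmul (B ^ G) (tk B G h) (tk B G h) t t' = tk B G h t t'"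
  unfolding kmul_tensor[OF assms(1)] unfolding tk_def
  by (rule prod.cong) (auto intro!: assms(2) dg_lt[OF assms(1)])

lemma tv_delta:
  assumes "0 < B" "t < B ^ G"
  shows "tv B G (\<lambda>c v. if v = 0 then 1 else 0) t = (if t = 0 then 1 else 0)"
proof (cases "t = 0")
  case True
  then show ?thesis by (simp add: tv_def dg_zero)
next
  case False
  then obtain c where "c < G" "dg B c t \<noteq> 0" using dg_zero_imp[OF assms] by auto
  then show ?thesis using False by (auto simp: tv_def intro!: prod_zero)
qed



definition kid :: kern where "kid t t' = (if t = t' then 1 else 0)"
definition kzero :: kern where "kzero t t' = 0"
definition kcomp :: "kern \<Rightarrow> kern" where "kcomp Q t t' = kid t t' - Q t t'"

definition bk :: "nat \<Rightarrow> (nat \<Rightarrow> nat \<Rightarrow> kern) \<Rightarrow> kern" where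
  "bk N blk i j = blk (i div N) (j div N) (i mod N) (j mod N)"

definition bvec :: "nat \<Rightarrow> (nat \<Rightarrow> nat \<Rightarrow> real) \<Rightarrow> nat \<Rightarrow> real" where
  "bvec N vb i = vb (i div N) (i mod N)"

lemma kapp_cong: "(\<And>j. j < n \<Longrightarrow> v j = w j) \<Longrightarrow> kapp n K v i = kapp n K w i"
  by (simp add: kapp_def)

lemma bk_kapp:
  assumes "0 < N"
  shows "kapp (4 * N) (bk N blk) (bvec N vb) i = (\<Sum>q<4. kapp N (blk (i div N) q) (vb q) (i mod N))"
proof -
  have "kapp (4 * N) (bk N blk) (bvec N vb) i
      = (\<Sum>q<4. \<Sum>t<N. bk N blk i (t + N * q) * bvec N vb (t + N * q))"
    unfolding kapp_def by (rule sum_blocks)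
  also have "\<dots> = (\<Sum>q<4. kapp N (blk (i div N) q) (vb q) (i mod N))"
    using assms by (auto simp: kapp_def bk_def bvec_def intro!: sum.cong)
  finally show ?thesis .
qed

lemma bk_kmul:
  assumes "0 < N"
  shows "kmul (4 * N) (bk N blk) (bk N blk') i k
       = (\<Sum>q<4. kmul N (blk (i div N) q) (blk' q (k div N)) (i mod N) (k mod N))"
proof -
  have "kmul (4 * N) (bk N blk) (bk N blk') i k
      = (\<Sum>q<4. \<Sum>t<N. bk N blk i (t + N * q) * bk N blk' (t + N * q) k)"
    unfolding kmul_def by (rule sum_blocks)
  also have "\<dots> = (\<Sum>q<4. kmul N (blk (i div N) q) (blk' q (k div N)) (i mod N) (k mod N))"
    using assms by (auto simp: kmul_def bk_def intro!: sum.cong)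
  finally show ?thesis .
qed

lemma sum_kid_left: "t < N \<Longrightarrow> (\<Sum>j<N. kid t j * f j) = (f t :: real)"
proof -
  assume t: "t < N"
  have "(\<Sum>j<N. kid t j * f j) = (\<Sum>j<N. if t = j then f j else 0)"
    by (rule sum.cong) (auto simp: kid_def)
  also have "\<dots> = f t" using t by (simp add: sum.delta)
  finally show ?thesis .
qed

lemma sum_kid_right: "t < N \<Longrightarrow> (\<Sum>j<N. f j * kid j t) = (f t :: real)"
proof -
  assume t: "t < N"
  have "(\<Sum>j<N. f j * kid j t) = (\<Sum>j<N. if t = j then f j else 0)"
    by (rule sum.cong) (auto simp: kid_def)
  also have "\<dots> = f t" using t by (simp add: sum.delta)
  finally show ?thesis .
qed

lemma kmul_kid_left[simp]: "t < N \<Longrightarrow> kmul N kid X t t' = X t t'"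
  by (simp add: kmul_def sum_kid_left)

lemma kmul_kid_right[simp]: "t' < N \<Longrightarrow> kmul N X kid t t' = X t t'"
  by (simp add: kmul_def sum_kid_right)

lemma kmul_kzero_left[simp]: "kmul N kzero X t t' = 0"
  by (simp add: kmul_def kzero_def)

lemma kmul_kzero_right[simp]: "kmul N X kzero t t' = 0"
  by (simp add: kmul_def kzero_def)

lemma kmul_kcomp_left: "t < N \<Longrightarrow> kmul N (kcomp Q) X t t' = X t t' - kmul N Q X t t'"
  by (simp add: kmul_def kcomp_def left_diff_distrib sum_subtractf sum_kid_left)

lemma kmul_kcomp_right: "t' < N \<Longrightarrow> kmul N X (kcomp Q) t t' = X t t' - kmul N X Q t t'"
  by (simp add: kmul_def kcomp_def right_diff_distrib sum_subtractf sum_kid_right)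

lemma kapp_kid[simp]: "t < N \<Longrightarrow> kapp N kid v t = v t"
  by (simp add: kapp_def sum_kid_left)

lemma kapp_kzero[simp]: "kapp N kzero v t = 0"
  by (simp add: kapp_def kzero_def)

lemma kapp_kcomp: "t < N \<Longrightarrow> kapp N (kcomp Q) v t = v t - kapp N Q v t"
  by (simp add: kapp_def kcomp_def left_diff_distrib sum_subtractf sum_kid_left)

definition vblk :: "kern \<Rightarrow> nat \<Rightarrow> nat \<Rightarrow> nat \<Rightarrow> kern" where
  "vblk Q \<beta> b b' = (if (b = 0 \<or> b = \<beta>) \<and> (b' = 0 \<or> b' = \<beta>) then (if b = b' then Q else kcomp Q)
     else if b = b' then kid else kzero)"

definition vk :: "nat \<Rightarrow> kern \<Rightarrow> nat \<Rightarrow> kern" where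
  "vk N Q \<beta> = bk N (vblk Q \<beta>)"

lemma sum4: "(\<Sum>q<(4::nat). f q) = f 0 + f 1 + f 2 + (f 3 :: real)"
  by (simp add: eval_nat_numeral)

lemma vk_sym:
  assumes "\<And>t t'. t < N \<Longrightarrow> t' < N \<Longrightarrow> Q t t' = Q t' t" "0 < N"
  shows "vk N Q \<beta> i j = vk N Q \<beta> j i"
  using assms by (auto simp: vk_def bk_def vblk_def kcomp_def kid_def kzero_def)

lemma vk_invol:
  assumes Qs: "\<And>t t'. t < N \<Longrightarrow> t' < N \<Longrightarrow> Q t t' = Q t' t"
    and Qi: "\<And>t t'. t < N \<Longrightarrow> t' < N \<Longrightarrow> kmul N Q Q t t' = Q t t'"
    and N: "0 < N" and \<beta>: "\<beta> \<in> {1,2,3}" and i: "i < 4 * N" and k: "k < 4 * N"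
  shows "kmul (4 * N) (vk N Q \<beta>) (vk N Q \<beta>) i k = (if i = k then 1 else 0)"
proof -
  define b where "b = i div N"
  define t where "t = i mod N"
  define b' where "b' = k div N"
  define t' where "t' = k mod N"
  have b: "b < 4" using i N by (simp add: b_def less_mult_imp_div_less)
  have b': "b' < 4" using k N by (simp add: b'_def less_mult_imp_div_less)
  have t: "t < N" and t': "t' < N" using N by (auto simp: t_def t'_def)
  have ik: "(i = k) = (b = b' \<and> t = t')"
    by (metis b'_def b_def div_mult_mod_eq t'_def t_def)
  have QQc: "kmul N Q (kcomp Q) t t' = 0" using t t' Qi by (simp add: kmul_kcomp_right)
  have QcQ: "kmul N (kcomp Q) Q t t' = 0" using t t' Qi by (simp add: kmul_kcomp_left)
  have QcQc: "kmul N (kcomp Q) (kcomp Q) t t' = kcomp Q t t'"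
    using t t' Qi by (simp add: kmul_kcomp_left kmul_kcomp_right kcomp_def)
  have QQ: "kmul N Q Q t t' = Q t t'" using Qi t t' by simp
  have "kmul (4 * N) (vk N Q \<beta>) (vk N Q \<beta>) i k
      = (\<Sum>q<4. kmul N (vblk Q \<beta> b q) (vblk Q \<beta> q b') t t')"
    unfolding vk_def bk_kmul[OF N] b_def t_def b'_def t'_def ..
  also have "\<dots> = (if b = b' \<and> t = t' then 1 else 0)"
  proof -
    have b4: "b = 0 \<or> b = 1 \<or> b = 2 \<or> b = 3" using b by auto
    have b'4: "b' = 0 \<or> b' = 1 \<or> b' = 2 \<or> b' = 3" using b' by auto
    have \<beta>3: "\<beta> = 1 \<or> \<beta> = 2 \<or> \<beta> = 3" using \<beta> by auto
    show ?thesis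
      unfolding sum4 using b4 b'4 \<beta>3 t t' QQc QcQ QcQc QQ
      by (elim disjE; simp add: vblk_def; simp add: kcomp_def kid_def)
  qed
  finally show ?thesis using ik by simp
qed

lemma vk_apply:
  assumes N: "0 < N" and \<beta>: "\<beta> \<in> {1,2,3}" and i: "i < 4 * N"
  shows "kapp (4 * N) (vk N Q \<beta>) (bvec N vb) i =
    (if i div N = 0 then kapp N Q (vb 0) (i mod N) + (vb \<beta> (i mod N) - kapp N Q (vb \<beta>) (i mod N))
     else if i div N = \<beta> then (vb 0 (i mod N) - kapp N Q (vb 0) (i mod N)) + kapp N Q (vb \<beta>) (i mod N)
     else vb (i div N) (i mod N))"
proof -
  define b where "b = i div N"
  define t where "t = i mod N"
  have b: "b < 4" using i N by (simp add: b_def less_mult_imp_div_less)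
  have t: "t < N" using N by (auto simp: t_def)
  have "kapp (4 * N) (vk N Q \<beta>) (bvec N vb) i = (\<Sum>q<4. kapp N (vblk Q \<beta> b q) (vb q) t)"
    unfolding vk_def bk_kapp[OF N] b_def t_def ..
  also have "\<dots> = (if b = 0 then kapp N Q (vb 0) t + (vb \<beta> t - kapp N Q (vb \<beta>) t)
     else if b = \<beta> then (vb 0 t - kapp N Q (vb 0) t) + kapp N Q (vb \<beta>) t
     else vb b t)"
  proof -
    have b4: "b = 0 \<or> b = 1 \<or> b = 2 \<or> b = 3" using b by auto
    have \<beta>3: "\<beta> = 1 \<or> \<beta> = 2 \<or> \<beta> = 3" using \<beta> by auto
    show ?thesis
      unfolding sum4 using b4 \<beta>3 t
      by (elim disjE; simp add: vblk_def kapp_kcomp)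
  qed
  finally show ?thesis by (simp add: b_def t_def)
qed

lemma unitary_vk:
  assumes Qs: "\<And>t t'. t < N \<Longrightarrow> t' < N \<Longrightarrow> Q t t' = Q t' t"
    and Qi: "\<And>t t'. t < N \<Longrightarrow> t' < N \<Longrightarrow> kmul N Q Q t t' = Q t t'"
    and N: "0 < N" and \<beta>: "\<beta> \<in> {1,2,3}"
  shows "unitary_mat (4 * N) (kmat (4 * N) (vk N Q \<beta>))"
  by (rule unitary_kmat_invol) (use vk_sym[OF Qs N] vk_invol[OF Qs Qi N \<beta>] in auto)



section \<open>Pair-averaging kernels\<close>

definition pk :: "(nat \<Rightarrow> bool) \<Rightarrow> nat \<Rightarrow> kern" where
  "pk act ofs i j = (if ofs \<le> i \<and> act ((i - ofs) div 2) then (if ofs \<le> j \<and> (i - ofs) div 2 = (j - ofs) div 2 then 1/2 else 0)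
     else kid i j)"

lemma pair_set:
  fixes ofs l B :: nat
  assumes "ofs + 2 * l + 1 < B"
  shows "{j. j < B \<and> ofs \<le> j \<and> (j - ofs) div 2 = l} = {ofs + 2 * l, ofs + 2 * l + 1}"
  using assms by auto

lemma pk_apply:
  fixes x :: "nat \<Rightarrow> real"
  assumes wf: "\<And>l. act l \<Longrightarrow> ofs + 2 * l + 1 < B" and i: "i < B"
  shows "kapp B (pk act ofs) x i = (if ofs \<le> i \<and> act ((i - ofs) div 2)
      then (x (ofs + 2 * ((i - ofs) div 2)) + x (ofs + 2 * ((i - ofs) div 2) + 1)) / 2 else x i)"
proof (cases "ofs \<le> i \<and> act ((i - ofs) div 2)")
  case True
  define l where "l = (i - ofs) div 2"
  have w: "ofs + 2 * l + 1 < B" using wf True by (simp add: l_def)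
  have "kapp B (pk act ofs) x i = (\<Sum>j<B. if ofs \<le> j \<and> (j - ofs) div 2 = l then x j / 2 else 0)"
    unfolding kapp_def by (rule sum.cong) (use True in \<open>auto simp: pk_def l_def\<close>)
  also have "\<dots> = (\<Sum>j\<in>{j. j < B \<and> ofs \<le> j \<and> (j - ofs) div 2 = l}. x j / 2)"
    by (simp add: sum.If_cases Int_def lessThan_def conj_commute)
  also have "\<dots> = (x (ofs + 2 * l) + x (ofs + 2 * l + 1)) / 2"
    unfolding pair_set[OF w] by (simp add: add_divide_distrib)
  finally show ?thesis using True by (simp add: l_def)
next
  case False
  have "kapp B (pk act ofs) x i = kapp B kid x i"
    unfolding kapp_def by (rule sum.cong) (use False in \<open>auto simp: pk_def\<close>)
  then show ?thesis using i by (subst if_not_P[OF False]) simp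
qed

lemma pk_sym: "pk act ofs i j = pk act ofs j i"
  unfolding pk_def kid_def by auto

lemma pk_nonneg: "0 \<le> pk act ofs i j"
  unfolding pk_def kid_def by auto

lemma pk_idem:
  assumes wf: "\<And>l. act l \<Longrightarrow> ofs + 2 * l + 1 < B" and i: "i < B" and k: "k < B"
  shows "kmul B (pk act ofs) (pk act ofs) i k = pk act ofs i k"
proof -
  have "kmul B (pk act ofs) (pk act ofs) i k = kapp B (pk act ofs) (\<lambda>j. pk act ofs j k) i"
    by (simp add: kmul_def kapp_def)
  also have "\<dots> = pk act ofs i k"
    using pk_apply[OF wf i, where x="\<lambda>j. pk act ofs j k"] by (auto simp: pk_def kid_def)
  finally show ?thesis .
qed

lemma pk_rowsum:
  assumes wf: "\<And>l. act l \<Longrightarrow> ofs + 2 * l + 1 < B" and i: "i < B"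
  shows "(\<Sum>j<B. pk act ofs i j) = 1"
  using pk_apply[OF wf i, where x="\<lambda>_. 1"] by (simp add: kapp_def)

lemma pk_sum_preserve:
  fixes x :: "nat \<Rightarrow> real"
  assumes wf: "\<And>l. act l \<Longrightarrow> ofs + 2 * l + 1 < B"
  shows "(\<Sum>i<B. kapp B (pk act ofs) x i) = (\<Sum>i<B. x i)"
proof -
  have "(\<Sum>i<B. kapp B (pk act ofs) x i) = (\<Sum>j<B. \<Sum>i<B. pk act ofs i j * x j)"
    unfolding kapp_def by (rule sum.swap)
  also have "\<dots> = (\<Sum>j<B. x j * (\<Sum>i<B. pk act ofs j i))"
    by (simp add: sum_distrib_left pk_sym mult.commute)
  also have "\<dots> = (\<Sum>j<B. x j)"
    by (rule sum.cong) (simp_all add: pk_rowsum[OF wf])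
  finally show ?thesis .
qed

lemma pk_nonneg_preserve:
  assumes "\<And>j. j < B \<Longrightarrow> 0 \<le> x j"
  shows "0 \<le> kapp B (pk act ofs) x i"
  unfolding kapp_def using assms pk_nonneg by (auto intro!: sum_nonneg)

definition supp_ok :: "nat \<Rightarrow> (nat \<Rightarrow> real) \<Rightarrow> nat \<Rightarrow> real \<Rightarrow> bool" where
  "supp_ok B x s m \<longleftrightarrow> (\<forall>i<B. 0 \<le> x i) \<and> (\<forall>i<B. i \<le> s \<longrightarrow> m \<le> x i) \<and> (\<forall>i<B. s < i \<longrightarrow> x i = 0)"

lemma pk_supp:
  assumes wf: "\<And>l. act l \<Longrightarrow> ofs + 2 * l + 1 < B" and ok: "supp_ok B x s m" and m: "0 \<le> m"
    and s: "s < B"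
  defines "st \<equiv> ofs \<le> s \<and> act ((s - ofs) div 2) \<and> s = ofs + 2 * ((s - ofs) div 2)"
  shows "supp_ok B (kapp B (pk act ofs) x) (if st then Suc s else s) (if st then m / 2 else m)"
  unfolding supp_ok_def
proof (intro conjI allI impI)
  fix i assume i: "i < B"
  show "0 \<le> kapp B (pk act ofs) x i" using ok by (auto simp: supp_ok_def intro!: pk_nonneg_preserve)
next
  fix i assume i: "i < B" and hi: "i \<le> (if st then Suc s else s)"
  show "(if st then m / 2 else m) \<le> kapp B (pk act ofs) x i"
  proof (cases "ofs \<le> i \<and> act ((i - ofs) div 2)")
    case True
    define l where "l = (i - ofs) div 2"
    have w: "ofs + 2 * l + 1 < B" using wf True by (simp add: l_def)
    have ap: "kapp B (pk act ofs) x i = (x (ofs + 2 * l) + x (ofs + 2 * l + 1)) / 2"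
      using pk_apply[OF wf i] True by (simp add: l_def)
    have nn: "0 \<le> x (ofs + 2 * l)" "0 \<le> x (ofs + 2 * l + 1)" using ok w by (auto simp: supp_ok_def)
    show ?thesis
    proof (cases "ofs + 2 * l + 1 \<le> s")
      case True
      then have "m \<le> x (ofs + 2 * l)" "m \<le> x (ofs + 2 * l + 1)" using ok w by (auto simp: supp_ok_def)
      then show ?thesis using ap m by auto
    next
      case False
      have oi: "ofs \<le> i" using True by simp
    have il: "i = ofs + 2 * l \<or> i = ofs + 2 * l + 1" using oi unfolding l_def by presburger
      show ?thesis
      proof (cases "ofs + 2 * l = s")
        case True2: True
        then have sl: "(s - ofs) div 2 = l" by auto
        then have "st" using True True2 by (auto simp: st_def l_def)
        have "m \<le> x (ofs + 2 * l)" using ok True2 s by (auto simp: supp_ok_def)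
        then show ?thesis using ap nn \<open>st\<close> by auto
      next
        case False2: False
        then have "s < ofs + 2 * l" using False by simp
        then have "\<not> st"
        proof (intro notI)
          assume st: st
          then have "i \<le> Suc s" using hi by simp
          then have e: "ofs + 2 * l = Suc s" using il \<open>s < ofs + 2 * l\<close> by auto
          from st have "s = ofs + 2 * ((s - ofs) div 2)" by (simp add: st_def)
          with e show False by presburger
        qed
        then show ?thesis using hi il \<open>s < ofs + 2 * l\<close> by auto
      qed
    qed
  next
    case False
    have ap: "kapp B (pk act ofs) x i = x i" using pk_apply[OF wf i] by (simp only: if_not_P[OF False])
    have "i \<le> s"
    proof (rule ccontr)
      assume "\<not> i \<le> s"
      then have "st" "i = Suc s" using hi by (auto split: if_splits)
      then have e: "s = ofs + 2 * ((s - ofs) div 2)" "act ((s - ofs) div 2)" "i = Suc s"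
        unfolding st_def by auto
      then have "(i - ofs) div 2 = (s - ofs) div 2" "ofs \<le> i" by presburger+
      then show False using False e by auto
    qed
    then have "m \<le> x i" using ok i by (auto simp: supp_ok_def)
    then show ?thesis using ap m by auto
  qed
next
  fix i assume i: "i < B" and hi: "(if st then Suc s else s) < i"
  show "kapp B (pk act ofs) x i = 0"
  proof (cases "ofs \<le> i \<and> act ((i - ofs) div 2)")
    case True
    define l where "l = (i - ofs) div 2"
    have w: "ofs + 2 * l + 1 < B" using wf True by (simp add: l_def)
    have ap: "kapp B (pk act ofs) x i = (x (ofs + 2 * l) + x (ofs + 2 * l + 1)) / 2"
      using pk_apply[OF wf i] True by (simp add: l_def)
    have oi: "ofs \<le> i" using True by simp
    have il: "i = ofs + 2 * l \<or> i = ofs + 2 * l + 1" using oi unfolding l_def by presburger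
    have "s < ofs + 2 * l"
    proof (rule ccontr)
      assume "\<not> s < ofs + 2 * l"
      then have le: "ofs + 2 * l \<le> s" by simp
      have sl: "s < i" using hi by (auto split: if_splits)
      show False
      proof (cases "ofs + 2 * l = s")
        case True
        then have "(s - ofs) div 2 = l" by auto
        then have "st" using \<open>ofs \<le> i \<and> act ((i - ofs) div 2)\<close> True by (auto simp: st_def l_def)
        then show False using hi il True by auto
      next
        case False
        then show False using il le sl by auto
      qed
    qed
    then have "x (ofs + 2 * l) = 0" "x (ofs + 2 * l + 1) = 0" using ok w by (auto simp: supp_ok_def)
    then show ?thesis using ap by simp
  next
    case False
    have "kapp B (pk act ofs) x i = x i" using pk_apply[OF wf i] by (simp only: if_not_P[OF False])
    moreover have "s < i" using hi by (auto split: if_splits)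
    ultimately show ?thesis using ok i by (auto simp: supp_ok_def)
  qed
qed



section \<open>The chain gadget for one pattern\<close>

definition act :: "'a list \<Rightarrow> 'a \<Rightarrow> nat \<Rightarrow> bool" where
  "act z a l \<longleftrightarrow> l < length z \<and> z ! l = a"

definition cstep :: "nat \<Rightarrow> 'a list \<Rightarrow> 'a \<Rightarrow> (nat \<Rightarrow> real) \<Rightarrow> nat \<Rightarrow> real" where
  "cstep B z a x = kapp B (pk (act z a) 1) (kapp B (pk (act z a) 0) x)"

definition e0 :: "nat \<Rightarrow> real" where "e0 v = (if v = 0 then 1 else 0)"

definition xs :: "nat \<Rightarrow> 'a list \<Rightarrow> 'a list \<Rightarrow> nat \<Rightarrow> real" where
  "xs B z w = fold (cstep B z) w e0"

definition Inv :: "nat \<Rightarrow> (nat \<Rightarrow> real) \<Rightarrow> nat \<Rightarrow> bool" where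
  "Inv B x p \<longleftrightarrow> supp_ok B x (2 * p) ((1/4) ^ p) \<and> (\<Sum>i<B. x i) = 1"

lemma act_wf0: "2 * length z < B \<Longrightarrow> act z a l \<Longrightarrow> 0 + 2 * l + 1 < B"
  by (auto simp: act_def)

lemma act_wf1: "2 * length z < B \<Longrightarrow> act z a l \<Longrightarrow> 1 + 2 * l + 1 < B"
  by (auto simp: act_def)

lemma Inv_step:
  assumes zB: "2 * length z < B" and I: "Inv B x p" and p: "p \<le> length z"
  shows "Inv B (cstep B z a x) (pstep z a p)"
proof -
  let ?y = "kapp B (pk (act z a) 0) x"
  have sp: "2 * p < B" using zB p by simp
  have ok: "supp_ok B x (2 * p) ((1/4) ^ p)" and s1: "(\<Sum>i<B. x i) = 1" using I by (auto simp: Inv_def)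
  have m0: "(0::real) \<le> (1/4) ^ p" by simp
  have y: "supp_ok B ?y (if act z a p then Suc (2 * p) else 2 * p) (if act z a p then (1/4) ^ p / 2 else (1/4) ^ p)"
    using pk_supp[where act="act z a" and ofs=0, OF act_wf0[where a=a, OF zB] ok m0 sp] by simp
  have sumy: "(\<Sum>i<B. ?y i) = 1" using pk_sum_preserve[where act="act z a" and ofs=0, OF act_wf0[where a=a, OF zB]] s1 by simp
  have sumz: "(\<Sum>i<B. cstep B z a x i) = 1"
    unfolding cstep_def using pk_sum_preserve[where act="act z a" and ofs=1 and x="?y", OF act_wf1[where a=a, OF zB]] sumy by simp
  show ?thesis
  proof (cases "act z a p")
    case True
    have sp1: "Suc (2 * p) < B" using True zB by (auto simp: act_def)
    have yy: "supp_ok B ?y (Suc (2 * p)) ((1/4) ^ p / 2)" using y True by simp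
    have m1: "(0::real) \<le> (1/4) ^ p / 2" by simp
    have st: "1 \<le> Suc (2 * p) \<and> act z a ((Suc (2 * p) - 1) div 2) \<and> Suc (2 * p) = 1 + 2 * ((Suc (2 * p) - 1) div 2)"
      using True by simp
    have "supp_ok B (cstep B z a x) (Suc (Suc (2 * p))) ((1/4) ^ p / 2 / 2)"
      unfolding cstep_def using pk_supp[where act="act z a" and ofs=1, OF act_wf1[where a=a, OF zB] yy m1 sp1] st by simp
    moreover have "pstep z a p = Suc p" using True by (simp add: pstep_def act_def)
    ultimately show ?thesis using sumz by (simp add: Inv_def)
  next
    case False
    have yy: "supp_ok B ?y (2 * p) ((1/4) ^ p)" using y False by simp
    have st: "\<not> (1 \<le> 2 * p \<and> act z a ((2 * p - 1) div 2) \<and> 2 * p = 1 + 2 * ((2 * p - 1) div 2))"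
      by presburger
    have wf1: "\<And>l. act z a l \<Longrightarrow> 1 + 2 * l + 1 < B" using act_wf1[OF zB] by blast
    have h: "supp_ok B (kapp B (pk (act z a) 1) ?y)
       (if 1 \<le> 2 * p \<and> act z a ((2 * p - 1) div 2) \<and> 2 * p = 1 + 2 * ((2 * p - 1) div 2) then Suc (2 * p) else 2 * p)
       (if 1 \<le> 2 * p \<and> act z a ((2 * p - 1) div 2) \<and> 2 * p = 1 + 2 * ((2 * p - 1) div 2) then (1/4) ^ p / 2 else (1/4) ^ p)"
      by (rule pk_supp[OF wf1 yy m0 sp])
    have "supp_ok B (cstep B z a x) (2 * p) ((1/4) ^ p)"
      unfolding cstep_def using h unfolding if_not_P[OF st] .
    moreover have "pstep z a p = p" using False by (simp add: pstep_def act_def)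
    ultimately show ?thesis using sumz by (simp add: Inv_def)
  qed
qed

lemma Inv_xs:
  assumes zB: "2 * length z < B"
  shows "Inv B (xs B z w) (prog z w)"
proof (induction w rule: rev_induct)
  case Nil
  have "0 < B" using zB by simp
  then have "(\<Sum>i<B. e0 i) = 1" by (simp add: e0_def sum.delta)
  then show ?case by (auto simp: Inv_def supp_ok_def xs_def prog_def e0_def)
next
  case (snoc a w)
  have "xs B z (w @ [a]) = cstep B z a (xs B z w)" by (simp add: xs_def)
  then show ?case using Inv_step[OF zB snoc prog_le] by (simp add: prog_snoc)
qed

definition ek :: "nat \<Rightarrow> nat \<Rightarrow> real" where "ek k i = (if i = 2 * k then 1 else 0)"
definition uk :: "nat \<Rightarrow> nat \<Rightarrow> real" where "uk k i = (if i \<le> 2 * k then 1 / sqrt (2 * k + 1) else 0)"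
definition dh :: "nat \<Rightarrow> nat \<Rightarrow> real" where "dh k i = (if i < 2 * k then 1 / sqrt (2 * k) else 0)"
definition dp :: "nat \<Rightarrow> nat \<Rightarrow> real" where
  "dp k i = (if i < 2 * k then 1 / sqrt (2 * k + 1) else if i = 2 * k then - 1 / sqrt (2 * k + 1) else 0)"

lemma sum_ind_lt: "M \<le> B \<Longrightarrow> (\<Sum>i<B. if i < M then c else 0) = real M * (c :: real)"
proof -
  assume "M \<le> B"
  then have "{..<B} \<inter> {i. i < M} = {..<M}" by auto
  then show ?thesis by (simp add: sum.If_cases)
qed

lemma sum_ind_le: "M < B \<Longrightarrow> (\<Sum>i<B. if i \<le> M then c else 0) = real (Suc M) * (c :: real)"
proof -
  assume "M < B"
  then have "{..<B} \<inter> {i. i \<le> M} = {..M}" by auto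
  then show ?thesis by (simp add: sum.If_cases)
qed

lemma inv_sqrt_sq: "0 \<le> a \<Longrightarrow> (1 / sqrt a) * (1 / sqrt a) = 1 / (a::real)"
proof -
  assume "0 \<le> a"
  have "(1 / sqrt a) * (1 / sqrt a) = 1 / (sqrt a * sqrt a)" by simp
  also have "\<dots> = 1 / a" using \<open>0 \<le> a\<close> by simp
  finally show ?thesis .
qed

lemma ip_ek_ek: "2 * k < B \<Longrightarrow> ip B (ek k) (ek k) = 1"
proof -
  assume a: "2 * k < B"
  have "ip B (ek k) (ek k) = (\<Sum>i<B. if i = 2 * k then 1 else 0)"
    unfolding ip_def by (rule sum.cong) (auto simp: ek_def)
  also have "\<dots> = 1" using a by (simp add: sum.delta)
  finally show ?thesis .
qed

lemma ip_ek_dh: "ip B (ek k) (dh k) = 0"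
  unfolding ip_def by (rule sum.neutral) (auto simp: ek_def dh_def)

lemma ip_dh_ek: "ip B (dh k) (ek k) = 0"
  unfolding ip_def by (rule sum.neutral) (auto simp: ek_def dh_def)

lemma ip_dh_dh: "2 * k < B \<Longrightarrow> 0 < k \<Longrightarrow> ip B (dh k) (dh k) = 1"
proof -
  assume a: "2 * k < B" "0 < k"
  have "ip B (dh k) (dh k) = (\<Sum>i<B. if i < 2 * k then 1 / real (2 * k) else 0)"
    unfolding ip_def by (rule sum.cong) (auto simp: dh_def inv_sqrt_sq)
  also have "\<dots> = 1" using a by (simp add: sum_ind_lt)
  finally show ?thesis .
qed

lemma ip_uk_uk: "2 * k < B \<Longrightarrow> ip B (uk k) (uk k) = 1"
proof -
  assume a: "2 * k < B"
  have "ip B (uk k) (uk k) = (\<Sum>i<B. if i \<le> 2 * k then 1 / real (2 * k + 1) else 0)"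
    unfolding ip_def by (rule sum.cong) (auto simp: uk_def inv_sqrt_sq)
  also have "\<dots> = 1" using a by (simp add: sum_ind_le)
  finally show ?thesis .
qed

lemma ip_dp_dp: "2 * k < B \<Longrightarrow> ip B (dp k) (dp k) = 1"
proof -
  assume a: "2 * k < B"
  have "ip B (dp k) (dp k) = (\<Sum>i<B. if i \<le> 2 * k then 1 / real (2 * k + 1) else 0)"
    unfolding ip_def by (rule sum.cong) (auto simp: dp_def inv_sqrt_sq)
  also have "\<dots> = 1" using a by (simp add: sum_ind_le)
  finally show ?thesis .
qed



context
  fixes B k :: nat and x :: "nat \<Rightarrow> real" and p :: nat
  assumes I: "Inv B x p" and pk: "p \<le> k" and kB: "2 * k < B"
begin

lemma x_zero: "i < B \<Longrightarrow> 2 * k < i \<Longrightarrow> x i = 0"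
  using I pk by (auto simp: Inv_def supp_ok_def)

lemma x_nonneg: "i < B \<Longrightarrow> 0 \<le> x i"
  using I by (auto simp: Inv_def supp_ok_def)

lemma x_sum: "(\<Sum>i<B. x i) = 1"
  using I by (auto simp: Inv_def)

lemma amp_ek: "ip B (ek k) x = x (2 * k)"
proof -
  have "ip B (ek k) x = (\<Sum>i<B. if i = 2 * k then x i else 0)"
    unfolding ip_def by (rule sum.cong) (auto simp: ek_def)
  also have "\<dots> = x (2 * k)" using kB by (simp add: sum.delta)
  finally show ?thesis .
qed

lemma amp_uk: "ip B (uk k) x = 1 / sqrt (2 * k + 1)"
proof -
  have "ip B (uk k) x = (\<Sum>i<B. 1 / sqrt (2 * k + 1) * x i)"
    unfolding ip_def by (rule sum.cong) (auto simp: uk_def x_zero)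
  also have "\<dots> = 1 / sqrt (2 * k + 1)" by (simp only: sum_distrib_left[symmetric] x_sum mult_1_right)
  finally show ?thesis .
qed

lemma amp_dh: "ip B (dh k) x = (1 - x (2 * k)) / sqrt (2 * k)"
proof -
  have "ip B (dh k) x = (\<Sum>i<B. 1 / sqrt (2 * k) * x i - (if i = 2 * k then 1 / sqrt (2 * k) * x i else 0))"
    unfolding ip_def by (rule sum.cong) (auto simp: dh_def x_zero)
  also have "\<dots> = 1 / sqrt (2 * k) - 1 / sqrt (2 * k) * x (2 * k)"
    using kB by (simp only: sum_subtractf sum_distrib_left[symmetric] x_sum) (simp add: sum.delta)
  finally show ?thesis by (simp add: diff_divide_distrib)
qed

lemma amp_dp: "ip B (dp k) x = (1 - 2 * x (2 * k)) / sqrt (2 * k + 1)"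
proof -
  have "ip B (dp k) x = (\<Sum>i<B. 1 / sqrt (2 * k + 1) * x i - (if i = 2 * k then 2 / sqrt (2 * k + 1) * x i else 0))"
    unfolding ip_def by (rule sum.cong) (auto simp: dp_def x_zero)
  also have "\<dots> = 1 / sqrt (2 * k + 1) - 2 / sqrt (2 * k + 1) * x (2 * k)"
    using kB by (simp only: sum_subtractf sum_distrib_left[symmetric] x_sum) (simp add: sum.delta)
  finally show ?thesis by (simp add: diff_divide_distrib)
qed

lemma x_le1: "i < B \<Longrightarrow> x i \<le> 1"
proof -
  assume i: "i < B"
  have "x i \<le> (\<Sum>j<B. x j)"
    by (rule member_le_sum) (use i x_nonneg in auto)
  then show ?thesis using x_sum by simp
qed

lemma notfound: "p < k \<Longrightarrow> x (2 * k) = 0"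
  using I kB by (auto simp: Inv_def supp_ok_def)

lemma found_low: "p = k \<Longrightarrow> (1/4) ^ k \<le> x (2 * k)"
  using I kB by (auto simp: Inv_def supp_ok_def)

lemma found_bound:
  assumes "p = k" "0 < k"
  shows "\<bar>1 - 2 * x (2 * k)\<bar> \<le> 1 - 2 * (1/4) ^ k"
proof -
  have a: "(1/4) ^ k \<le> x (2 * k)" using found_low assms by simp
  have b: "(1/4) ^ k \<le> x 0" using I assms kB by (auto simp: Inv_def supp_ok_def)
  have "x 0 + x (2 * k) = (\<Sum>j\<in>{0, 2 * k}. x j)" using assms by simp
  also have "\<dots> \<le> (\<Sum>j<B. x j)"
    by (rule sum_mono2) (use kB x_nonneg in auto)
  finally have c: "x 0 + x (2 * k) \<le> 1" using x_sum by simp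
  show ?thesis using a b c by (simp add: abs_le_iff)
qed

end

section \<open>Projection onto an orthonormal family\<close>

definition Pk :: "nat \<Rightarrow> 'i set \<Rightarrow> ('i \<Rightarrow> nat \<Rightarrow> real) \<Rightarrow> kern" where
  "Pk n T D t t' = (\<Sum>S\<in>T. D S t * D S t')"

context
  fixes n :: nat and T :: "'i set" and D :: "'i \<Rightarrow> nat \<Rightarrow> real"
  assumes fin: "finite T"
    and on: "\<And>S S'. S \<in> T \<Longrightarrow> S' \<in> T \<Longrightarrow> ip n (D S) (D S') = (if S = S' then 1 else 0)"
begin

lemma Pk_sym: "Pk n T D t t' = Pk n T D t' t"
  by (simp add: Pk_def mult.commute)

lemma Pk_apply: "kapp n (Pk n T D) X t = (\<Sum>S\<in>T. D S t * ip n (D S) X)"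
proof -
  have "kapp n (Pk n T D) X t = (\<Sum>j<n. \<Sum>S\<in>T. D S t * (D S j * X j))"
    by (simp add: kapp_def Pk_def sum_distrib_right mult.assoc)
  also have "\<dots> = (\<Sum>S\<in>T. D S t * ip n (D S) X)"
    by (subst sum.swap) (simp add: ip_def sum_distrib_left)
  finally show ?thesis .
qed

lemma Pk_idem: "kmul n (Pk n T D) (Pk n T D) t t'' = Pk n T D t t''"
proof -
  have "kmul n (Pk n T D) (Pk n T D) t t'' = kapp n (Pk n T D) (\<lambda>j. Pk n T D j t'') t"
    by (simp add: kmul_def kapp_def)
  also have "\<dots> = (\<Sum>S\<in>T. D S t * ip n (D S) (\<lambda>j. Pk n T D j t''))"
    by (rule Pk_apply)
  also have "\<dots> = (\<Sum>S\<in>T. D S t * D S t'')"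
  proof (rule sum.cong[OF refl])
    fix S assume S: "S \<in> T"
    have "ip n (D S) (\<lambda>j. Pk n T D j t'') = (\<Sum>S'\<in>T. ip n (D S) (D S') * D S' t'')"
      by (simp add: ip_def Pk_def sum_distrib_left sum_distrib_right mult.assoc sum.swap[of _ T])
    also have "\<dots> = (\<Sum>S'\<in>T. if S = S' then D S' t'' else 0)"
      by (rule sum.cong) (simp_all add: on S)
    also have "\<dots> = D S t''" using S fin by (simp add: sum.delta)
    finally show "D S t * ip n (D S) (\<lambda>j. Pk n T D j t'') = D S t * D S t''" by simp
  qed
  finally show ?thesis by (simp add: Pk_def)
qed

lemma Pk_norm: "(\<Sum>t<n. (kapp n (Pk n T D) X t)\<^sup>2) = (\<Sum>S\<in>T. (ip n (D S) X)\<^sup>2)"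
proof -
  define a where "a S = ip n (D S) X" for S
  have "(\<Sum>t<n. (kapp n (Pk n T D) X t)\<^sup>2) = (\<Sum>t<n. (\<Sum>S\<in>T. D S t * a S) * (\<Sum>S'\<in>T. D S' t * a S'))"
    by (simp add: Pk_apply a_def power2_eq_square)
  also have "\<dots> = (\<Sum>S\<in>T. \<Sum>S'\<in>T. a S * a S' * ip n (D S) (D S'))"
    by (simp add: sum_product ip_def sum_distrib_left sum.swap[of _ "{..<n}"] mult_ac)
  also have "\<dots> = (\<Sum>S\<in>T. \<Sum>S'\<in>T. if S = S' then a S * a S' else 0)"
    by (rule sum.cong[OF refl], rule sum.cong[OF refl]) (simp add: on)
  also have "\<dots> = (\<Sum>S\<in>T. (a S)\<^sup>2)"
    using fin by (simp add: sum.delta power2_eq_square)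
  finally show ?thesis by (simp add: a_def)
qed

end



section \<open>The global construction\<close>

locale qcon =
  fixes Zs :: "'a list list" and r :: nat and F :: "bool list \<Rightarrow> bool"
  assumes nonempty: "\<And>z. z \<in> set Zs \<Longrightarrow> z \<noteq> []"
    and rpos: "0 < r"
begin

definition "m = length Zs"
definition "K = Suc (sum_list (map length Zs))"
definition "B = 2 * K + 1"
definition "G = m * r"
definition "Nt = B ^ G"
definition "zc c = Zs ! (c div r)"
definition "kc c = length (zc c)"

definition "X w = tv B G (\<lambda>c. xs B (zc c) w)"
definition "H1 a = tk B G (\<lambda>c. pk (act (zc c) a) 0)"
definition "H2 a = tk B G (\<lambda>c. pk (act (zc c) a) 1)"

definition "dvec S c = (if c div r \<in> S then (if c mod r = 0 then ek (kc c) else uk (kc c))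
                        else (if c mod r = 0 then dh (kc c) else dp (kc c)))"
definition "DS S = tv B G (dvec S)"
definition "TT = {S. S \<subseteq> {..<m} \<and> F (map (\<lambda>i. i \<in> S) [0..<m])}"
definition "PP = Pk Nt TT DS"

lemma B_pos: "0 < B" by (simp add: B_def)

lemma Nt_pos: "0 < Nt" by (simp add: Nt_def B_pos)

lemma zc_mem: "c < G \<Longrightarrow> zc c \<in> set Zs"
proof -
  assume "c < G"
  then have "c div r < m" using rpos by (simp add: G_def less_mult_imp_div_less)
  then show ?thesis by (simp add: zc_def m_def)
qed

lemma len_le: "z \<in> set Zs \<Longrightarrow> length z < K"
proof -
  assume "z \<in> set Zs"
  then have "length z \<in> set (map length Zs)" by simp
  then have "length z \<le> sum_list (map length Zs)" by (rule member_le_sum_list) simp_all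
  then show ?thesis by (simp add: K_def)
qed

lemma zc_B: "c < G \<Longrightarrow> 2 * length (zc c) < B"
  using len_le[OF zc_mem] by (fastforce simp: B_def)

lemma kc_pos: "c < G \<Longrightarrow> 0 < kc c"
  using nonempty[OF zc_mem] by (simp add: kc_def)

lemma kc_B: "c < G \<Longrightarrow> 2 * kc c < B"
  using zc_B by (simp add: kc_def)

lemma K_pos: "0 < K" by (simp add: K_def)

lemma H_sym:
  shows "H1 a t t' = H1 a t' t" "H2 a t t' = H2 a t' t"
  unfolding H1_def H2_def by (rule tk_sym[OF B_pos], rule pk_sym)+

lemma H1_idem: "kmul Nt (H1 a) (H1 a) t t' = H1 a t t'"
  unfolding H1_def Nt_def
  by (rule tk_idem[OF B_pos], rule pk_idem) (use act_wf0[OF zc_B] in auto)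

lemma H2_idem: "kmul Nt (H2 a) (H2 a) t t' = H2 a t t'"
  unfolding H2_def Nt_def
  by (rule tk_idem[OF B_pos], rule pk_idem) (use act_wf1[OF zc_B] in auto)

lemma X_step: "kapp Nt (H2 a) (kapp Nt (H1 a) (X w)) t = X (w @ [a]) t"
proof -
  have "kapp Nt (H2 a) (kapp Nt (H1 a) (X w)) t
      = kapp Nt (H2 a) (tv B G (\<lambda>c. kapp B (pk (act (zc c) a) 0) (xs B (zc c) w))) t"
    by (rule kapp_cong) (simp add: Nt_def H1_def X_def kapp_tensor[OF B_pos])
  also have "\<dots> = tv B G (\<lambda>c. cstep B (zc c) a (xs B (zc c) w)) t"
    by (simp add: Nt_def H2_def kapp_tensor[OF B_pos] cstep_def)
  also have "\<dots> = X (w @ [a]) t"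
    by (simp add: X_def xs_def)
  finally show ?thesis .
qed

lemma X_Nil: "t < Nt \<Longrightarrow> X [] t = (if t = 0 then 1 else 0)"
proof -
  assume "t < Nt"
  have "X [] t = tv B G (\<lambda>c v. if v = 0 then 1 else 0) t"
    by (simp add: X_def xs_def e0_def[abs_def])
  then show ?thesis using tv_delta[OF B_pos] \<open>t < Nt\<close> by (simp add: Nt_def)
qed

lemma dvec_ip_same: "c < G \<Longrightarrow> ip B (dvec S c) (dvec S c) = 1"
  using kc_B[of c] kc_pos[of c]
  by (auto simp: dvec_def ip_ek_ek ip_uk_uk ip_dh_dh ip_dp_dp)

lemma fin_TT: "finite TT"
  by (rule finite_subset[of _ "Pow {..<m}"]) (auto simp: TT_def)

lemma TT_sub: "S \<in> TT \<Longrightarrow> S \<subseteq> {..<m}"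
  by (simp add: TT_def)

lemma DS_on: "S \<in> TT \<Longrightarrow> S' \<in> TT \<Longrightarrow> ip Nt (DS S) (DS S') = (if S = S' then 1 else 0)"
proof -
  assume S: "S \<in> TT" and S': "S' \<in> TT"
  have eq: "ip Nt (DS S) (DS S') = (\<Prod>c<G. ip B (dvec S c) (dvec S' c))"
    unfolding DS_def Nt_def by (rule ip_tensor[OF B_pos])
  show ?thesis
  proof (cases "S = S'")
    case True
    then show ?thesis using eq dvec_ip_same by simp
  next
    case False
    then obtain i where i: "i < m" "(i \<in> S) \<noteq> (i \<in> S')"
      using TT_sub[OF S] TT_sub[OF S'] by blast
    define c where "c = i * r"
    have c: "c < G" "c div r = i" "c mod r = 0" using i rpos by (auto simp: c_def G_def)
    have "ip B (dvec S c) (dvec S' c) = 0"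
      using i c by (auto simp: dvec_def ip_ek_dh ip_dh_ek)
    then have "(\<Prod>c<G. ip B (dvec S c) (dvec S' c)) = 0"
      using c by (intro prod_zero) auto
    then show ?thesis using eq False by simp
  qed
qed

lemma PP_sym: "PP t t' = PP t' t"
  unfolding PP_def by (rule Pk_sym[OF fin_TT DS_on])

lemma PP_idem: "kmul Nt PP PP t t' = PP t t'"
  unfolding PP_def by (rule Pk_idem[OF fin_TT DS_on])

lemma PP_norm: "(\<Sum>t<Nt. (kapp Nt PP Y t)\<^sup>2) = (\<Sum>S\<in>TT. (ip Nt (DS S) Y)\<^sup>2)"
  unfolding PP_def by (rule Pk_norm[OF fin_TT DS_on])

lemma cPP_sym: "kcomp PP t t' = kcomp PP t' t"
  by (simp add: kcomp_def PP_sym kid_def)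

lemma cPP_idem: "t < Nt \<Longrightarrow> t' < Nt \<Longrightarrow> kmul Nt (kcomp PP) (kcomp PP) t t' = kcomp PP t t'"
  by (simp add: kmul_kcomp_left kmul_kcomp_right PP_idem kcomp_def)

end



lemma kvec_carrier[simp]: "kvec n v \<in> carrier_vec n"
  unfolding carrier_vec_def by simp

context qcon
begin

definition "D = 4 * Nt"
definition "K1 a = vk Nt (H1 a) 1"
definition "K2 a = vk Nt (H2 a) 2"
definition "KE = vk Nt (kcomp PP) 3"

definition Mq :: "'a mmqfa" where
  "Mq = \<lparr>qdim = D, trans = (\<lambda>s. case s of Some a \<Rightarrow> kmat D (K2 a) * kmat D (K1 a) | None \<Rightarrow> kmat D KE),
         init = 0, Qacc = {3 * Nt..<4 * Nt}, Qrej = {Nt..<3 * Nt}\<rparr>"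

definition "Psi w = bvec Nt (\<lambda>q. if q = 0 then X w else (\<lambda>_. 0))"

lemma kapp_zero_vec[simp]: "kapp n Q (\<lambda>_. 0) t = 0"
  by (simp add: kapp_def)

lemma wf_Mq: "wf_mmqfa Mq"
proof -
  have u1: "unitary_mat D (kmat D (K1 a))" for a
    unfolding D_def K1_def
    by (rule unitary_vk) (use H_sym H1_idem Nt_pos in auto)
  have u2: "unitary_mat D (kmat D (K2 a))" for a
    unfolding D_def K2_def
    by (rule unitary_vk) (use H_sym H2_idem Nt_pos in auto)
  have u3: "unitary_mat D (kmat D KE)"
    unfolding D_def KE_def
    by (rule unitary_vk) (use cPP_sym cPP_idem Nt_pos in auto)
  have "unitary_mat D (trans Mq s)" for s
    using u1 u2 u3 unitary_mult by (cases s) (auto simp: Mq_def)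
  moreover have "0 < D" using Nt_pos by (simp add: D_def)
  ultimately show ?thesis by (auto simp: wf_mmqfa_def Mq_def D_def)
qed

lemma Qnon_Mq: "Qnon Mq = {..<Nt}"
  by (auto simp: Qnon_def Mq_def D_def)

lemma letter_apply:
  assumes i: "i < D"
  shows "kapp D (K2 a) (kapp D (K1 a) (Psi w)) i =
     (if i div Nt = 0 then X (w @ [a]) (i mod Nt) else if i div Nt = 3 then 0
      else kapp D (K2 a) (kapp D (K1 a) (Psi w)) i)"
proof -
  define vb1 where "vb1 (q::nat) = (if q = 0 then kapp Nt (H1 a) (X w)
      else if q = 1 then (\<lambda>t. X w t - kapp Nt (H1 a) (X w) t) else (\<lambda>_. 0))" for q
  have s1: "kapp D (K1 a) (Psi w) j = bvec Nt vb1 j" if j: "j < D" for j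
  proof -
    have "kapp D (K1 a) (Psi w) j = (if j div Nt = 0 then kapp Nt (H1 a) (X w) (j mod Nt) + (0 - 0)
      else if j div Nt = 1 then (X w (j mod Nt) - kapp Nt (H1 a) (X w) (j mod Nt)) + 0 else 0)"
      unfolding K1_def Psi_def D_def using vk_apply[OF Nt_pos, of 1 j] j by (simp add: D_def)
    then show ?thesis by (simp add: bvec_def vb1_def)
  qed
  have "kapp D (K2 a) (kapp D (K1 a) (Psi w)) i = kapp D (K2 a) (bvec Nt vb1) i"
    by (rule kapp_cong) (use s1 in auto)
  also have "\<dots> = (if i div Nt = 0 then kapp Nt (H2 a) (vb1 0) (i mod Nt) + (vb1 2 (i mod Nt) - kapp Nt (H2 a) (vb1 2) (i mod Nt))
     else if i div Nt = 2 then (vb1 0 (i mod Nt) - kapp Nt (H2 a) (vb1 0) (i mod Nt)) + kapp Nt (H2 a) (vb1 2) (i mod Nt)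
     else vb1 (i div Nt) (i mod Nt))"
    unfolding K2_def D_def using vk_apply[OF Nt_pos, of 2 i] i by (simp add: D_def)
  finally have e: "kapp D (K2 a) (kapp D (K1 a) (Psi w)) i = \<dots>" .
  show ?thesis
  proof (cases "i div Nt = 0")
    case True
    then show ?thesis using e X_step by (simp add: vb1_def)
  next
    case False
    then show ?thesis using e by (simp add: vb1_def)
  qed
qed

lemma trans_some: "trans Mq (Some a) *\<^sub>v kvec D v = kvec D (kapp D (K2 a) (kapp D (K1 a) v))"
proof -
  have "trans Mq (Some a) *\<^sub>v kvec D v = kmat D (K2 a) *\<^sub>v (kmat D (K1 a) *\<^sub>v kvec D v)"
    by (simp add: Mq_def assoc_mult_mat_vec[of _ D D _ D])
  then show ?thesis by (simp add: kmat_mult_vec)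
qed

lemma trans_none: "trans Mq None *\<^sub>v kvec D v = kvec D (kapp D KE v)"
  by (simp add: Mq_def kmat_mult_vec)

lemma acc_zero_letter: "proj (Qacc Mq) (trans Mq (Some a) *\<^sub>v kvec D (Psi w)) = kvec D (\<lambda>_. 0)"
  unfolding trans_some proj_kvec
proof (rule kvec_cong)
  fix i assume i: "i < D"
  show "(if i \<in> Qacc Mq then kapp D (K2 a) (kapp D (K1 a) (Psi w)) i else 0) = 0"
  proof (cases "i \<in> Qacc Mq")
    case True
    then have "i div Nt = 3" using Nt_pos by (auto simp: Mq_def div_nat_eqI)
    then show ?thesis using letter_apply[OF i] True by simp
  qed simp
qed

lemma run_letters:
  "fst (run Mq (map Some w)) = kvec D (Psi w) \<and> fst (snd (run Mq (map Some w))) = 0"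
proof (induction w rule: rev_induct)
  case Nil
  have "basis_ket D 0 = kvec D (Psi [])"
    unfolding basis_ket_kvec
  proof (rule kvec_cong)
    fix i assume i: "i < D"
    show "(if i = 0 then 1 else 0) = Psi [] i"
    proof (cases "i < Nt")
      case True
      then show ?thesis using X_Nil[OF True] by (simp add: Psi_def bvec_def)
    next
      case False
      then have "i div Nt \<noteq> 0" "i \<noteq> 0" using Nt_pos by (auto simp: div_eq_0_iff)
      then show ?thesis by (simp add: Psi_def bvec_def)
    qed
  qed
  then show ?case by (simp add: run_def Mq_def)
next
  case (snoc a w)
  obtain pr where r: "run Mq (map Some w) = (kvec D (Psi w), 0, pr)"
    using snoc by (metis prod.collapse)
  have "run Mq (map Some (w @ [a])) = step Mq (Some a) (run Mq (map Some w))"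
    by (simp add: run_def)
  also have "\<dots> = (proj (Qnon Mq) (trans Mq (Some a) *\<^sub>v kvec D (Psi w)),
       0 + sqnorm (proj (Qacc Mq) (trans Mq (Some a) *\<^sub>v kvec D (Psi w))),
       pr + sqnorm (proj (Qrej Mq) (trans Mq (Some a) *\<^sub>v kvec D (Psi w))))"
    by (simp add: r step_def Let_def)
  finally have e: "run Mq (map Some (w @ [a])) = \<dots>" .
  have p1: "proj (Qnon Mq) (trans Mq (Some a) *\<^sub>v kvec D (Psi w)) = kvec D (Psi (w @ [a]))"
    unfolding trans_some proj_kvec Qnon_Mq
  proof (rule kvec_cong)
    fix i assume i: "i < D"
    show "(if i \<in> {..<Nt} then kapp D (K2 a) (kapp D (K1 a) (Psi w)) i else 0) = Psi (w @ [a]) i"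
    proof (cases "i < Nt")
      case True
      then show ?thesis using letter_apply[OF i] by (simp add: Psi_def bvec_def)
    next
      case False
      then have "i div Nt \<noteq> 0" using Nt_pos by (auto simp: div_eq_0_iff)
      then show ?thesis using False by (simp add: Psi_def bvec_def)
    qed
  qed
  have p2: "sqnorm (proj (Qacc Mq) (trans Mq (Some a) *\<^sub>v kvec D (Psi w))) = 0"
    unfolding acc_zero_letter sqnorm_kvec by simp
  show ?case using e p1 p2 by simp
qed

lemma end_decisive_Mq: "end_decisive Mq"
  unfolding end_decisive_def
proof (intro allI)
  fix x a
  have "fst (run Mq (map Some x)) = kvec D (Psi x)" using run_letters by blast
  then show "proj (Qacc Mq) (trans Mq (Some a) *\<^sub>v fst (run Mq (map Some x))) = 0\<^sub>v (qdim Mq)"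
    using acc_zero_letter by (simp add: zero_kvec Mq_def)
qed

lemma acc_formula: "acc_prob Mq w = (\<Sum>S\<in>TT. (ip Nt (DS S) (X w))\<^sup>2)"
proof -
  obtain pr where r: "run Mq (map Some w) = (kvec D (Psi w), 0, pr)"
    using run_letters by (metis prod.collapse)
  have "acc_prob Mq w = fst (snd (step Mq None (run Mq (map Some w))))"
    by (simp add: acc_prob_def run_def)
  also have "\<dots> = sqnorm (proj (Qacc Mq) (kvec D (kapp D KE (Psi w))))"
    by (simp add: r step_def trans_none Let_def)
  also have "\<dots> = (\<Sum>i<4 * Nt. (if i \<in> {3 * Nt..<4 * Nt} then kapp D KE (Psi w) i else 0)\<^sup>2)"
    by (simp add: proj_kvec sqnorm_kvec Mq_def) (simp add: D_def)
  also have "\<dots> = (\<Sum>q<4. \<Sum>t<Nt. (if t + Nt * q \<in> {3 * Nt..<4 * Nt} then kapp D KE (Psi w) (t + Nt * q) else 0)\<^sup>2)"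
    by (rule sum_blocks)
  also have "\<dots> = (\<Sum>t<Nt. (kapp Nt PP (X w) t)\<^sup>2)"
  proof -
    have blk: "kapp D KE (Psi w) (t + Nt * 3) = kapp Nt PP (X w) t" if t: "t < Nt" for t
    proof -
      have i: "t + Nt * 3 < 4 * Nt" using t by simp
      have d: "(t + Nt * 3) div Nt = 3" "(t + Nt * 3) mod Nt = t" using t by auto
      have "kapp D KE (Psi w) (t + Nt * 3) = X w t - kapp Nt (kcomp PP) (X w) t"
        unfolding KE_def Psi_def D_def using vk_apply[OF Nt_pos, of 3 "t + Nt * 3"] i d by simp
      then show ?thesis using t by (simp add: kapp_kcomp)
    qed
    have "(\<Sum>q<4. \<Sum>t<Nt. (if t + Nt * q \<in> {3 * Nt..<4 * Nt} then kapp D KE (Psi w) (t + Nt * q) else 0)\<^sup>2)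
        = (\<Sum>t<Nt. (kapp D KE (Psi w) (t + Nt * 3))\<^sup>2)"
      unfolding sum4 by simp
    also have "\<dots> = (\<Sum>t<Nt. (kapp Nt PP (X w) t)\<^sup>2)"
      by (rule sum.cong) (simp_all add: blk)
    finally show ?thesis .
  qed
  also have "\<dots> = (\<Sum>S\<in>TT. (ip Nt (DS S) (X w))\<^sup>2)"
    by (rule PP_norm)
  finally show ?thesis .
qed

end



context qcon
begin

definition "xw i w = xs B (Zs ! i) w"
definition "kk i = length (Zs ! i)"
definition "nu i = (1 / sqrt (2 * kk i + 1)) ^ (r - 1)"
definition "gg i S w = (if i \<in> S then xw i w (2 * kk i)
   else ((1 - xw i w (2 * kk i)) / sqrt (2 * kk i)) * (1 - 2 * xw i w (2 * kk i)) ^ (r - 1))"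

lemma kk_facts: "i < m \<Longrightarrow> 0 < kk i \<and> kk i < K \<and> 2 * kk i < B"
proof -
  assume i: "i < m"
  then have z: "Zs ! i \<in> set Zs" by (simp add: m_def)
  show ?thesis using nonempty[OF z] len_le[OF z] by (simp add: kk_def B_def)
qed

lemma Inv_xw: "i < m \<Longrightarrow> Inv B (xw i w) (prog (Zs ! i) w)"
  unfolding xw_def by (rule Inv_xs) (use kk_facts in \<open>auto simp: kk_def\<close>)

lemma prog_kk: "prog (Zs ! i) w \<le> kk i"
  using prog_le by (simp add: kk_def)

lemma copy_prod:
  assumes i: "i < m"
  shows "(\<Prod>j<r. ip B (dvec S (j + r * i)) (xs B (zc (j + r * i)) w)) = nu i * gg i S w"
proof -
  obtain r' where r': "r = Suc r'" using rpos by (cases r) auto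
  have cd: "(j + r * i) div r = i" "(j + r * i) mod r = j" if "j < r" for j
    using that rpos by auto
  have zc: "zc (j + r * i) = Zs ! i" "kc (j + r * i) = kk i" if "j < r" for j
    using cd[OF that] by (auto simp: zc_def kc_def kk_def)
  define x where "x = xw i w"
  define k where "k = kk i"
  have I: "Inv B x (prog (Zs ! i) w)" using Inv_xw[OF i] by (simp add: x_def)
  have pk: "prog (Zs ! i) w \<le> k" using prog_kk by (simp add: k_def)
  have kB: "2 * k < B" using kk_facts[OF i] by (simp add: k_def)
  have f: "ip B (dvec S (j + r * i)) (xs B (zc (j + r * i)) w) =
     (if j = 0 then (if i \<in> S then x (2 * k) else (1 - x (2 * k)) / sqrt (2 * k))
      else (if i \<in> S then 1 / sqrt (2 * k + 1) else (1 - 2 * x (2 * k)) / sqrt (2 * k + 1)))"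
    if j: "j < r" for j
  proof -
    have dv: "dvec S (j + r * i) = (if i \<in> S then (if j = 0 then ek k else uk k)
        else (if j = 0 then dh k else dp k))"
      unfolding dvec_def cd[OF j] zc[OF j] k_def ..
    have xx: "xs B (zc (j + r * i)) w = x" using zc[OF j] by (simp add: x_def xw_def)
    show ?thesis unfolding dv xx
      using amp_ek[OF I pk kB] amp_uk[OF I pk kB] amp_dh[OF I pk kB] amp_dp[OF I pk kB]
      by simp
  qed
  have "(\<Prod>j<r. ip B (dvec S (j + r * i)) (xs B (zc (j + r * i)) w))
      = (\<Prod>j<r. (if j = 0 then (if i \<in> S then x (2 * k) else (1 - x (2 * k)) / sqrt (2 * k))
      else (if i \<in> S then 1 / sqrt (2 * k + 1) else (1 - 2 * x (2 * k)) / sqrt (2 * k + 1))))"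
    by (rule prod.cong) (simp_all add: f)
  also have "\<dots> = (if i \<in> S then x (2 * k) else (1 - x (2 * k)) / sqrt (2 * k)) *
      (if i \<in> S then 1 / sqrt (2 * k + 1) else (1 - 2 * x (2 * k)) / sqrt (2 * k + 1)) ^ r'"
    unfolding r' prod.lessThan_Suc_shift by simp
  also have "\<dots> = nu i * gg i S w"
  proof -
    have rm: "r - Suc 0 = r'" using r' by simp
    show ?thesis by (simp add: nu_def gg_def rm x_def k_def power_divide mult_ac)
  qed
  finally show ?thesis .
qed

lemma amp_factor: "ip Nt (DS S) (X w) = (\<Prod>i<m. nu i) * (\<Prod>i<m. gg i S w)"
proof -
  have "ip Nt (DS S) (X w) = (\<Prod>c<G. ip B (dvec S c) (xs B (zc c) w))"
    unfolding DS_def X_def Nt_def by (rule ip_tensor[OF B_pos])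
  also have "\<dots> = (\<Prod>i<m. \<Prod>j<r. ip B (dvec S (j + r * i)) (xs B (zc (j + r * i)) w))"
    unfolding G_def by (rule prod_blocks)
  also have "\<dots> = (\<Prod>i<m. nu i * gg i S w)"
    by (rule prod.cong) (simp_all add: copy_prod)
  finally show ?thesis by (simp add: prod.distrib)
qed

lemma acc_factor: "acc_prob Mq w = (\<Prod>i<m. nu i)\<^sup>2 * (\<Sum>S\<in>TT. \<Prod>i<m. (gg i S w)\<^sup>2)"
  unfolding acc_formula amp_factor
  by (simp add: power_mult_distrib sum_distrib_left prod_power_distrib)

end



lemma two_le_16pow: "2 * k \<le> (16::nat) ^ K" if "k < K" for k K :: nat
proof -
  have "K < 2 ^ K" by (rule less_exp)
  then have "k \<le> 2 ^ K" using that by linarith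
  then have "2 * k \<le> 2 ^ Suc K" by simp
  also have "(2::nat) ^ Suc K \<le> 2 ^ (4 * K)" using that by (intro power_increasing) auto
  also have "(2::nat) ^ (4 * K) = 16 ^ K" by (simp add: power_mult)
  finally show ?thesis .
qed

context qcon
begin

definition "rho = 1 - 2 * (1/4::real) ^ K"

lemma gg_bounds:
  assumes i: "i < m"
  shows "(gg i S w)\<^sup>2 \<le> 1"
    and "i \<in> S \<Longrightarrow> in_pattern (Zs ! i) w \<Longrightarrow> (1/16) ^ K \<le> (gg i S w)\<^sup>2"
    and "i \<notin> S \<Longrightarrow> \<not> in_pattern (Zs ! i) w \<Longrightarrow> (1/16) ^ K \<le> (gg i S w)\<^sup>2"
    and "i \<in> S \<Longrightarrow> \<not> in_pattern (Zs ! i) w \<Longrightarrow> gg i S w = 0"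
    and "i \<notin> S \<Longrightarrow> in_pattern (Zs ! i) w \<Longrightarrow> (gg i S w)\<^sup>2 \<le> rho ^ (2 * (r - 1))"
proof -
  define x where "x = xw i w"
  define k where "k = kk i"
  define p where "p = prog (Zs ! i) w"
  have I: "Inv B x p" using Inv_xw[OF i] by (simp add: x_def p_def)
  have pk: "p \<le> k" using prog_kk by (simp add: k_def p_def)
  have kf: "0 < k" "k < K" "2 * k < B" using kk_facts[OF i] by (auto simp: k_def)
  have found: "in_pattern (Zs ! i) w \<longleftrightarrow> p = k" unfolding p_def k_def kk_def by (metis prog_iff)
  have x0: "0 \<le> x (2 * k)" "x (2 * k) \<le> 1"
    using x_nonneg[OF I pk kf(3) kf(3)] x_le1[OF I pk kf(3) kf(3)] by auto
  have gin: "i \<in> S \<Longrightarrow> gg i S w = x (2 * k)" by (simp add: gg_def x_def k_def)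
  have gout: "i \<notin> S \<Longrightarrow> gg i S w = ((1 - x (2 * k)) / sqrt (2 * real k)) * (1 - 2 * x (2 * k)) ^ (r - 1)"
    by (simp add: gg_def x_def k_def)
  have sq: "1 \<le> sqrt (2 * real k)"
  proof -
    have "1 \<le> 2 * real k" using kf(1) by linarith
    then show ?thesis by (subst real_sqrt_one[symmetric]) (rule real_sqrt_le_mono)
  qed
  have a1: "\<bar>(1 - x (2 * k)) / sqrt (2 * real k)\<bar> \<le> 1"
  proof -
    have b: "\<bar>1 - x (2 * k)\<bar> \<le> 1" using x0 by (simp only: abs_le_iff) linarith
    have "\<bar>(1 - x (2 * k)) / sqrt (2 * real k)\<bar> = \<bar>1 - x (2 * k)\<bar> / sqrt (2 * real k)"
      by (simp add: abs_divide)
    also have "\<dots> \<le> 1"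
    proof -
      have c: "\<bar>1 - x (2 * k)\<bar> \<le> sqrt (2 * real k)" using b sq by linarith
      have "0 < sqrt (2 * real k)" using sq by linarith
      then show ?thesis using c by (simp only: divide_le_eq_1_pos)
    qed
    finally show ?thesis .
  qed
  have a2: "\<bar>(1 - 2 * x (2 * k)) ^ (r - 1)\<bar> \<le> 1"
  proof -
    have b: "\<bar>1 - 2 * x (2 * k)\<bar> \<le> 1" using x0 by (simp only: abs_le_iff) linarith
    show ?thesis unfolding power_abs by (rule power_le_one) (use b in auto)
  qed
  have absg: "\<bar>gg i S w\<bar> \<le> 1"
  proof (cases "i \<in> S")
    case True then show ?thesis using gin x0 by simp
  next
    case False
    have "\<bar>gg i S w\<bar> = \<bar>(1 - x (2 * k)) / sqrt (2 * real k)\<bar> * \<bar>(1 - 2 * x (2 * k)) ^ (r - 1)\<bar>"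
      using gout[OF False] by (simp only: abs_mult)
    also have "\<dots> \<le> 1 * 1" by (rule mult_mono) (use a1 a2 in auto)
    finally show ?thesis by simp
  qed
  show "(gg i S w)\<^sup>2 \<le> 1" using absg by (simp only: abs_square_le_1)
  have q4: "(1/4::real) ^ K \<le> (1/4) ^ k" using kf by (intro power_decreasing) auto
  show "(1/16) ^ K \<le> (gg i S w)\<^sup>2" if "i \<in> S" "in_pattern (Zs ! i) w"
  proof -
    have "(1/4) ^ k \<le> x (2 * k)" using found_low[OF I pk kf(3)] that found by simp
    then have "(1/4::real) ^ K \<le> x (2 * k)" using q4 by linarith
    then have "((1/4::real) ^ K)\<^sup>2 \<le> (x (2 * k))\<^sup>2" by (intro power_mono) auto
    moreover have "((1/4::real) ^ K)\<^sup>2 = (1/16) ^ K"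
    proof -
      have "((1/4::real) ^ K)\<^sup>2 = ((1/4)\<^sup>2) ^ K" by (simp only: power_mult[symmetric] mult.commute)
      moreover have "(1/4::real)\<^sup>2 = 1/16" by (simp add: power2_eq_square)
      ultimately show ?thesis by simp
    qed
    ultimately show ?thesis using gin[OF that(1)] by simp
  qed
  show "(1/16) ^ K \<le> (gg i S w)\<^sup>2" if "i \<notin> S" "\<not> in_pattern (Zs ! i) w"
  proof -
    have "p < k" using that found pk by simp
    then have "x (2 * k) = 0" using notfound[OF I pk kf(3)] by simp
    then have "(gg i S w)\<^sup>2 = 1 / (2 * k)" using gout[OF that(1)] kf by (simp add: power_divide)
    moreover have "1 / (16::real) ^ K \<le> 1 / real (2 * k)"
    proof (rule divide_left_mono)
      have "real (2 * k) \<le> real (16 ^ K)" using two_le_16pow[OF kf(2)] by (simp only: of_nat_le_iff)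
      then show "real (2 * k) \<le> 16 ^ K" by simp
      show "0 < (16::real) ^ K * real (2 * k)" using kf by simp
    qed simp
    ultimately show ?thesis by (simp add: power_one_over)
  qed
  show "gg i S w = 0" if "i \<in> S" "\<not> in_pattern (Zs ! i) w"
  proof -
    have "p < k" using that found pk by simp
    then show ?thesis using notfound[OF I pk kf(3)] gin[OF that(1)] by simp
  qed
  show "(gg i S w)\<^sup>2 \<le> rho ^ (2 * (r - 1))" if "i \<notin> S" "in_pattern (Zs ! i) w"
  proof -
    have pk': "p = k" using that found by simp
    have fb: "\<bar>1 - 2 * x (2 * k)\<bar> \<le> 1 - 2 * (1/4) ^ k" using found_bound[OF I pk kf(3) pk' kf(1)] .
    have r0: "0 \<le> 1 - 2 * (1/4::real) ^ k"
    proof -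
      have "(1/4::real) ^ k \<le> (1/4) ^ 1" using kf by (intro power_decreasing) auto
      then show ?thesis by simp
    qed
    have rk: "1 - 2 * (1/4::real) ^ k \<le> rho" using q4 by (simp add: rho_def)
    have "\<bar>(1 - 2 * x (2 * k)) ^ (r - 1)\<bar> \<le> rho ^ (r - 1)"
      unfolding power_abs by (rule power_mono) (use fb rk in auto)
    then have "\<bar>gg i S w\<bar> \<le> 1 * rho ^ (r - 1)"
      unfolding gout[OF that(1)] abs_mult by (intro mult_mono) (use a1 in auto)
    then have "\<bar>gg i S w\<bar>\<^sup>2 \<le> (rho ^ (r - 1))\<^sup>2"
      by (intro power_mono) auto
    then have "(gg i S w)\<^sup>2 \<le> (rho ^ (r - 1))\<^sup>2" by simp
    then show ?thesis by (simp add: power_mult[symmetric] mult.commute)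
  qed
qed

end



context qcon
begin

lemma nu_pos: "i < m \<Longrightarrow> 0 < nu i"
  by (simp add: nu_def)

lemma rho_nonneg: "0 \<le> rho"
proof -
  have "(1/4::real) ^ K \<le> (1/4) ^ 1" using K_pos by (intro power_decreasing) auto
  then show ?thesis by (simp add: rho_def)
qed

lemma bounded:
  assumes ch: "(2::real) ^ m * rho ^ (2 * (r - 1)) \<le> ((1/16) ^ K) ^ m / 2"
  shows "accepts_bounded_error Mq {w. F (map (\<lambda>z. in_pattern z w) Zs)}"
proof -
  define nu2 where "nu2 = (\<Prod>i<m. nu i)\<^sup>2"
  define mu where "mu = ((1/16::real) ^ K) ^ m"
  have nu2: "0 < nu2" unfolding nu2_def using nu_pos by (fastforce simp: prod_pos)
  have mu: "0 < mu" by (simp add: mu_def)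
  define P where "P w S = (\<Prod>i<m. (gg i S w)\<^sup>2)" for w S
  have Pnn: "0 \<le> P w S" for w S unfolding P_def by (simp add: prod_nonneg)
  have acc: "acc_prob Mq w = nu2 * (\<Sum>S\<in>TT. P w S)" for w
    unfolding acc_factor nu2_def P_def ..
  have main: "(w \<in> {w. F (map (\<lambda>z. in_pattern z w) Zs)} \<longrightarrow> nu2 * mu \<le> acc_prob Mq w) \<and>
      (w \<notin> {w. F (map (\<lambda>z. in_pattern z w) Zs)} \<longrightarrow> acc_prob Mq w \<le> nu2 * (mu / 2))" for w
  proof -
    define S0 where "S0 = {i. i < m \<and> in_pattern (Zs ! i) w}"
    have S0sub: "S0 \<subseteq> {..<m}" by (auto simp: S0_def)
    have mp: "map (\<lambda>i. i \<in> S0) [0..<m] = map (\<lambda>z. in_pattern z w) Zs"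
      by (rule nth_equalityI) (auto simp: m_def S0_def)
    have memb: "w \<in> {w. F (map (\<lambda>z. in_pattern z w) Zs)} \<longleftrightarrow> S0 \<in> TT"
      using S0sub mp by (simp add: TT_def)
    show ?thesis
    proof (intro conjI impI)
      assume "w \<in> {w. F (map (\<lambda>z. in_pattern z w) Zs)}"
      then have S0T: "S0 \<in> TT" using memb by simp
      have "mu = (\<Prod>i<m. (1/16::real) ^ K)" by (simp add: mu_def)
      also have "\<dots> \<le> P w S0"
        unfolding P_def
      proof (rule prod_mono)
        fix i assume i: "i \<in> {..<m}"
        show "0 \<le> (1/16::real) ^ K \<and> (1/16) ^ K \<le> (gg i S0 w)\<^sup>2"
        proof (cases "i \<in> S0")
          case True
          then have "in_pattern (Zs ! i) w" by (simp add: S0_def)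
          then show ?thesis using gg_bounds(2)[of i S0 w] i True by simp
        next
          case False
          then have "\<not> in_pattern (Zs ! i) w" using i by (simp add: S0_def)
          then show ?thesis using gg_bounds(3)[of i S0 w] i False by simp
        qed
      qed
      also have "\<dots> \<le> (\<Sum>S\<in>TT. P w S)"
        by (rule member_le_sum) (use S0T Pnn fin_TT in auto)
      finally have "mu \<le> (\<Sum>S\<in>TT. P w S)" .
      then show "nu2 * mu \<le> acc_prob Mq w" using nu2 acc by simp
    next
      assume "w \<notin> {w. F (map (\<lambda>z. in_pattern z w) Zs)}"
      then have S0T: "S0 \<notin> TT" using memb by simp
      have bnd: "P w S \<le> rho ^ (2 * (r - 1))" if S: "S \<in> TT" for S
      proof -
        have "S \<noteq> S0" using S S0T by auto
        then obtain i where i: "i < m" "(i \<in> S) \<noteq> (i \<in> S0)"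
          using TT_sub[OF S] S0sub by blast
        show ?thesis
        proof (cases "i \<in> S")
          case True
          then have "\<not> in_pattern (Zs ! i) w" using i by (simp add: S0_def)
          then have "gg i S w = 0" using gg_bounds(4)[of i S w] i True by simp
          then have "P w S = 0" unfolding P_def using i by (intro prod_zero) auto
          then show ?thesis using rho_nonneg by simp
        next
          case False
          then have f: "in_pattern (Zs ! i) w" using i by (simp add: S0_def)
          have "P w S = (gg i S w)\<^sup>2 * (\<Prod>j\<in>{..<m} - {i}. (gg j S w)\<^sup>2)"
            unfolding P_def using i by (subst prod.remove[of _ i]) auto
          also have "\<dots> \<le> rho ^ (2 * (r - 1)) * 1"
          proof (rule mult_mono)
            show "(gg i S w)\<^sup>2 \<le> rho ^ (2 * (r - 1))" using gg_bounds(5)[of i S w] i False f by simp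
            show "(\<Prod>j\<in>{..<m} - {i}. (gg j S w)\<^sup>2) \<le> 1"
              by (rule prod_le_1) (use gg_bounds(1) in auto)
          qed (use rho_nonneg in \<open>auto intro: prod_nonneg\<close>)
          finally show ?thesis by simp
        qed
      qed
      have "(\<Sum>S\<in>TT. P w S) \<le> real (card TT) * rho ^ (2 * (r - 1))"
        by (rule sum_bounded_above) (use bnd in auto)
      also have "\<dots> \<le> 2 ^ m * rho ^ (2 * (r - 1))"
      proof (rule mult_right_mono)
        have "card TT \<le> card (Pow {..<m::nat})"
          by (rule card_mono) (auto simp: TT_def)
        then have "card TT \<le> 2 ^ m" by (simp add: card_Pow)
        then show "real (card TT) \<le> 2 ^ m" by (metis of_nat_le_iff of_nat_numeral of_nat_power)
      qed (use rho_nonneg in auto)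
      also have "\<dots> \<le> mu / 2" using ch by (simp add: mu_def)
      finally show "acc_prob Mq w \<le> nu2 * (mu / 2)" using acc nu2
        by (simp add: mult_left_mono)
    qed
  qed
  show ?thesis
    unfolding accepts_bounded_error_def
  proof (rule exI[of _ "nu2 * mu * 3 / 4"], rule exI[of _ "nu2 * mu / 8"], intro conjI allI impI)
    show "0 < nu2 * mu / 8" using nu2 mu by simp
  next
    fix x assume "x \<in> {w. F (map (\<lambda>z. in_pattern z w) Zs)}"
    then have "nu2 * mu \<le> acc_prob Mq x" using main by blast
    moreover have "0 < nu2 * mu" using nu2 mu by simp
    ultimately show "nu2 * mu * 3 / 4 + nu2 * mu / 8 < acc_prob Mq x" by linarith
  next
    fix x assume "x \<notin> {w. F (map (\<lambda>z. in_pattern z w) Zs)}"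
    then have "acc_prob Mq x \<le> nu2 * (mu / 2)" using main by blast
    moreover have "0 < nu2 * mu" using nu2 mu by simp
    moreover have "nu2 * (mu / 2) = nu2 * mu / 2" by simp
    ultimately show "acc_prob Mq x < nu2 * mu * 3 / 4 - nu2 * mu / 8" by linarith
  qed
qed

end



theorem theorem4p15:
  fixes L :: "('a::finite) list set"
  assumes "piecewise_testable L"
  shows "\<exists>M :: 'a mmqfa. wf_mmqfa M \<and> end_decisive M \<and> accepts_bounded_error M L"
proof -
  obtain Zs :: "'a list list" and F where ne: "\<forall>z\<in>set Zs. z \<noteq> []"
    and L: "\<forall>w. w \<in> L \<longleftrightarrow> F (map (\<lambda>z. in_pattern z w) Zs)"
    using pt_normal_form[OF assms] by blast
  have Leq: "L = {w. F (map (\<lambda>z. in_pattern z w) Zs)}" using L by auto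
  define K0 where "K0 = Suc (sum_list (map length Zs))"
  define m0 where "m0 = length Zs"
  define rho0 where "rho0 = 1 - 2 * (1/4::real) ^ K0"
  define mu0 where "mu0 = ((1/16::real) ^ K0) ^ m0"
  have r0: "0 \<le> rho0"
  proof -
    have "(1/4::real) ^ K0 \<le> (1/4) ^ 1" by (intro power_decreasing) (auto simp: K0_def)
    then show ?thesis by (simp add: rho0_def)
  qed
  have r1: "rho0 < 1" by (simp add: rho0_def)
  have "rho0\<^sup>2 < 1" using r0 r1 by (simp add: power_less_one_iff abs_square_less_1)
  moreover have "0 < mu0 / 2 / 2 ^ m0" by (simp add: mu0_def)
  ultimately obtain n where n: "(rho0\<^sup>2) ^ n < mu0 / 2 / 2 ^ m0"
    using real_arch_pow_inv by blast
  define r where "r = Suc n"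
  interpret qcon Zs r F
    by unfold_locales (use ne in \<open>auto simp: r_def\<close>)
  have ch: "(2::real) ^ m * rho ^ (2 * (r - 1)) \<le> ((1/16) ^ K) ^ m / 2"
  proof -
    have e: "rho = rho0" "m = m0" "K = K0"
      by (simp_all add: rho_def rho0_def K_def K0_def m_def m0_def)
    have "rho ^ (2 * (r - 1)) = (rho0\<^sup>2) ^ n" by (simp add: e r_def power_mult)
    then have "rho ^ (2 * (r - 1)) < mu0 / 2 / 2 ^ m0" using n by simp
    then have "2 ^ m0 * rho ^ (2 * (r - 1)) < mu0 / 2" by (simp add: field_simps)
    then show ?thesis by (simp add: e mu0_def)
  qed
  show ?thesis
    by (rule exI[of _ Mq]) (simp add: wf_Mq end_decisive_Mq bounded[OF ch] Leq)
qed


end
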